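(* Let $W$ be the affine Weyl group of an irreducible reduced crystallographic root system $\Phi$ of rank 2 (so $W$ is generated by $S=\{s_0,s_1,s_2\}$ and its alcoves are triangles tiling the plane). Let $\alpha\in\Phi$, $c\in\mathbb{Z}$, and let $r_0,r_1,r_2$ be the reflections in the hyperplanes $H_{\alpha,c},H_{\alpha,c+1},H_{\alpha,c+2}$ respectively (three adjacent parallel reflections). Let $x\in W$ be an element whose alcove lies in the closed strip between $H_{r_0}$ and $H_{r_1}$, and suppose $$\ell(r_2r_1x)=\ell(r_1x)+1=\ell(x)+2.$$ Then $\ell(r_0x)=\ell(x)\pm 1$.
   Context: Let $E$ be a Euclidean plane with inner product $\langle\cdot,\cdot\rangle$, $\Phi\subset E$ an irreducible reduced crystallographic root system of rank 2 (type $A_2$, $B_2$ or $G_2$). For $\beta\in\Phi$ put $\beta^\vee=2\beta/\langle\beta,\beta\rangle$; for $k\in\mathbb{Z}$ put $H_{\beta,k}=\{v\in E:\langle v,\beta\rangle=k\}$ and $s_{\beta;k}(v)=v-(\langle v,\beta\rangle-k)\beta^\vee$. The affine Weyl group $W$ is generated by all $s_{\beta;k}$; it is a Coxeter group whose simple generators $s_0,s_1,s_2$ are the reflections in the three walls of the fundamental alcove $A_0$ (the connected component of $E\setminus\bigcup H_{\beta,k}$ containing small positive multiples of the dominant direction, with $0$ in its closure), $s_0$ being the reflection in the wall not containing $0$. Alcoves are the connected components of $E\setminus\bigcup_{\beta,k}H_{\beta,k}$; $W$ acts simply transitively on them and $w\in W$ is identified with the alcove $wA_0$. The reflections of $W$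 (conjugates of simple generators) are exactly the $s_{\beta;k}$, and $H_r$ denotes the hyperplane fixed by a reflection $r$. $\ell$ is the Coxeter length; for a reflection $r$ one has $\ell(rx)>\ell(x)$ iff the alcove $x$ lies on the same side of $H_r$ as $A_0$. *)

theory Defs
  imports "HOL-Analysis.Analysis"
begin

type_synonym pt = "real^2"

definition coroot :: "pt \<Rightarrow> pt" where
  "coroot b = (2 / (b \<bullet> b)) *\<^sub>R b"

definition hyp :: "pt \<Rightarrow> int \<Rightarrow> pt set" where
  "hyp b k = {v. v \<bullet> b = of_int k}"

definition refl :: "pt \<Rightarrow> int \<Rightarrow> pt \<Rightarrow> pt" where
  "refl b k v = v - (v \<bullet> b - of_int k) *\<^sub>R coroot b"

definition root_system :: "pt set \<Rightarrow> bool" where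
  "root_system \<Phi> \<longleftrightarrow>
     finite \<Phi> \<and> 0 \<notin> \<Phi> \<and> span \<Phi> = UNIV \<and>
     (\<forall>a\<in>\<Phi>. \<forall>b\<in>\<Phi>. refl a 0 b \<in> \<Phi>) \<and>
     (\<forall>a\<in>\<Phi>. \<forall>b\<in>\<Phi>. b \<bullet> coroot a \<in> \<int>) \<and>
     (\<forall>a\<in>\<Phi>. \<forall>t::real. t *\<^sub>R a \<in> \<Phi> \<longrightarrow> t = 1 \<or> t = -1) \<and>
     (\<forall>P Q. P \<union> Q = \<Phi> \<and> P \<inter> Q = {} \<and> P \<noteq> {} \<and> Q \<noteq> {}
        \<longrightarrow> (\<exists>a\<in>P. \<exists>b\<in>Q. a \<bullet> b \<noteq> 0))"

definition regular :: "pt set \<Rightarrow> pt set" where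
  "regular \<Phi> = UNIV - (\<Union>b\<in>\<Phi>. \<Union>k. hyp b k)"

definition is_alcove :: "pt set \<Rightarrow> pt set \<Rightarrow> bool" where
  "is_alcove \<Phi> A \<longleftrightarrow> (\<exists>p\<in>regular \<Phi>. A = connected_component_set (regular \<Phi>) p)"

definition refls :: "pt set \<Rightarrow> (pt \<Rightarrow> pt) set" where
  "refls \<Phi> = {refl b k | b k. b \<in> \<Phi>}"

inductive_set affW :: "pt set \<Rightarrow> (pt \<Rightarrow> pt) set" for \<Phi> where
  id: "id \<in> affW \<Phi>"
| step: "r \<in> refls \<Phi> \<Longrightarrow> w \<in> affW \<Phi> \<Longrightarrow> r \<circ> w \<in> affW \<Phi>"

text \<open>Simple reflections: reflections in the walls of the fundamental alcove A0
  (a hyperplane is a wall iff it meets the closure of A0 in at least two points).\<close>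
definition simple_refls :: "pt set \<Rightarrow> pt set \<Rightarrow> (pt \<Rightarrow> pt) set" where
  "simple_refls \<Phi> A0 = {refl b k | b k. b \<in> \<Phi> \<and>
       (\<exists>p q. p \<noteq> q \<and> p \<in> closure A0 \<inter> hyp b k \<and> q \<in> closure A0 \<inter> hyp b k)}"

definition len :: "pt set \<Rightarrow> pt set \<Rightarrow> (pt \<Rightarrow> pt) \<Rightarrow> nat" where
  "len \<Phi> A0 w = (LEAST n. \<exists>ws. length ws = n \<and> set ws \<subseteq> simple_refls \<Phi> A0 \<and>
                                 w = foldr (\<circ>) ws id)"

end

theory Submission
  imports Defs
begin

definition rot :: "pt \<Rightarrow> pt" where "rot v = (\<chi> i. if i = 1 then - (v$2) else v$1)"

lemma rot1[simp]: "rot v $ 1 = - (v$2)" and rot2[simp]: "rot v $ 2 = v$1"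
  by (simp_all add: rot_def)

lemma inner2: "x \<bullet> (y::pt) = x$1*y$1 + x$2*y$2"
  by (simp add: inner_vec_def sum_2)

lemma rot_inner_self[simp]: "rot v \<bullet> v = 0" "v \<bullet> rot v = 0"
  by (simp_all add: inner2)

lemma rot_rot_inner[simp]: "rot v \<bullet> rot v = v \<bullet> v"
  by (simp add: inner2)

lemma rot_anti: "rot b \<bullet> c = - (rot c \<bullet> b)"
  by (simp add: inner2)

lemma rot_scale: "rot (t *\<^sub>R v) = t *\<^sub>R rot v"
  by (simp add: vec_eq_iff forall_2)

lemma decomp2:
  assumes "b \<noteq> (0::pt)"
  shows "x = ((x \<bullet> b)/(b \<bullet> b)) *\<^sub>R b + ((x \<bullet> rot b)/(b \<bullet> b)) *\<^sub>R rot b"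
proof -
  have bb: "b \<bullet> b = b$1*b$1 + b$2*b$2" by (simp add: inner2)
  have "b \<bullet> b > 0" using assms by simp
  hence nz: "b$1*b$1 + b$2*b$2 \<noteq> 0" using bb by linarith
  have B: "b \<bullet> b \<noteq> 0" using assms by simp
  have e1: "(x \<bullet> b)*b$1 - (x \<bullet> rot b)*b$2 = x$1 * (b \<bullet> b)"
    by (simp add: inner2 algebra_simps)
  have e2: "(x \<bullet> b)*b$2 + (x \<bullet> rot b)*b$1 = x$2 * (b \<bullet> b)"
    by (simp add: inner2 algebra_simps)
  have c1: "x$1 = ((x \<bullet> b)/(b \<bullet> b)) * b$1 + ((x \<bullet> rot b)/(b \<bullet> b)) * (- b$2)"
    using e1 B by (simp add: field_simps)
  have c2: "x$2 = ((x \<bullet> b)/(b \<bullet> b)) * b$2 + ((x \<bullet> rot b)/(b \<bullet> b)) * (b$1)"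
    using e2 B by (simp add: field_simps)
  show ?thesis
    unfolding vec_eq_iff forall_2 using c1 c2 by simp
qed

lemma para_of_rot:
  assumes "b \<noteq> (0::pt)" "x \<bullet> rot b = 0"
  shows "x = ((x \<bullet> b)/(b \<bullet> b)) *\<^sub>R b"
  using decomp2[OF assms(1), of x] assms(2) by simp

lemma perp_is_rot:
  assumes "b \<noteq> (0::pt)" "x \<bullet> b = 0"
  shows "x = ((x \<bullet> rot b)/(b \<bullet> b)) *\<^sub>R rot b"
  using decomp2[OF assms(1), of x] assms(2) by simp

section \<open>Basic facts on reflections\<close>

lemma coroot_inner: "b \<noteq> 0 \<Longrightarrow> coroot b \<bullet> b = 2"
  by (simp add: coroot_def)

lemma coroot_inner': "b \<noteq> 0 \<Longrightarrow> b \<bullet> coroot b = 2"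
  by (simp add: coroot_def)

lemma refl_alt: "refl b k v = v - (v \<bullet> b) *\<^sub>R coroot b + of_int k *\<^sub>R coroot b"
  by (simp add: refl_def algebra_simps)

lemma refl_inner_b: "b \<noteq> 0 \<Longrightarrow> refl b k v \<bullet> b = 2 * of_int k - v \<bullet> b"
  by (simp add: refl_def inner_diff_left coroot_inner algebra_simps)

lemma refl_invol: "b \<noteq> 0 \<Longrightarrow> refl b k (refl b k v) = v"
proof -
  assume b: "b \<noteq> 0"
  have "refl b k (refl b k v) = refl b k v - (refl b k v \<bullet> b - of_int k) *\<^sub>R coroot b"
    by (simp add: refl_def)
  also have "\<dots> = refl b k v - (of_int k - v \<bullet> b) *\<^sub>R coroot b"
    using refl_inner_b[OF b, of k v] by simp
  also have "\<dots> = v - ((v \<bullet> b - of_int k) + (of_int k - v \<bullet> b)) *\<^sub>R coroot b"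
    unfolding refl_def scaleR_add_left by simp
  also have "\<dots> = v" by simp
  finally show ?thesis .
qed

lemma refl_invol_fun: "b \<noteq> 0 \<Longrightarrow> refl b k \<circ> refl b k = id"
  by (auto simp: refl_invol)

lemma coroot_neg: "coroot (-b) = - coroot b"
  by (simp add: coroot_def)

lemma refl_neg: "refl (-b) (-k) = refl b k"
  by (rule ext) (simp add: refl_def coroot_neg algebra_simps)

lemma refl_key:
  assumes "b \<noteq> 0"
  shows "refl b k v \<bullet> refl b 0 \<beta> = v \<bullet> \<beta> - of_int k * (\<beta> \<bullet> coroot b)"
proof -
  have bb: "b \<bullet> b \<noteq> 0" using assms by simp
  show ?thesis
    unfolding refl_def coroot_def using bb
    by (simp add: inner_diff_left inner_diff_right algebra_simps inner_commute) (simp add: field_simps)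
qed

lemma refl_self_neg: "b \<noteq> 0 \<Longrightarrow> refl b 0 b = - b"
proof -
  assume b: "b \<noteq> 0"
  have "(b \<bullet> b) *\<^sub>R ((2/(b \<bullet> b)) *\<^sub>R b) = 2 *\<^sub>R b" using b by simp
  hence "refl b 0 b = b - 2 *\<^sub>R b" by (simp add: refl_def coroot_def)
  also have "\<dots> = - b" by (simp add: scaleR_2)
  finally show ?thesis .
qed

definition isomL :: "(pt \<Rightarrow> pt) \<Rightarrow> bool" where
  "isomL L \<longleftrightarrow> linear L \<and> (\<forall>u v. L u \<bullet> L v = u \<bullet> v)"

definition fl :: "pt \<Rightarrow> pt \<Rightarrow> int" where "fl b v = \<lfloor>v \<bullet> b\<rfloor>"

lemma isomL_id: "isomL id"
  by (simp add: isomL_def real_vector.linear_id)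

lemma isomL_comp: "isomL L \<Longrightarrow> isomL M \<Longrightarrow> isomL (L \<circ> M)"
  by (auto simp: isomL_def linear_compose)

lemma isomL_refl0:
  assumes "b \<noteq> 0" shows "isomL (refl b 0)"
proof -
  have bb: "b \<bullet> b \<noteq> 0" using assms by simp
  have "linear (refl b 0)"
    by (rule linearI) (simp_all add: refl_def inner_add_left algebra_simps)
  moreover have "refl b 0 u \<bullet> refl b 0 v = u \<bullet> v" for u v
    unfolding refl_def coroot_def using bb
    by (simp add: inner_diff_left inner_diff_right algebra_simps inner_commute)
  ultimately show ?thesis by (simp add: isomL_def)
qed

lemma refl0_selfadj: "b \<noteq> 0 \<Longrightarrow> refl b 0 u \<bullet> v = u \<bullet> refl b 0 v"
  unfolding refl_def coroot_def
  by (simp add: inner_diff_left inner_diff_right algebra_simps inner_commute)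

lemma isomL_inj: "isomL L \<Longrightarrow> L u = L v \<Longrightarrow> u = v"
proof -
  assume L: "isomL L" and e: "L u = L v"
  have "L (u - v) = 0" using L e by (simp add: isomL_def real_vector.linear_diff)
  hence "L (u - v) \<bullet> L (u - v) = 0" by simp
  hence "(u - v) \<bullet> (u - v) = 0" using L unfolding isomL_def by metis
  thus "u = v" by simp
qed

lemma isomL_norm: "isomL L \<Longrightarrow> norm (L u) = norm u"
  by (simp add: isomL_def norm_eq_sqrt_inner)

locale rs =
  fixes \<Phi> :: "pt set"
  assumes RS: "root_system \<Phi>"
begin

lemma fin: "finite \<Phi>" using RS by (simp add: root_system_def)
lemma nz: "b \<in> \<Phi> \<Longrightarrow> b \<noteq> 0" using RS by (auto simp: root_system_def)
lemma reflc: "a \<in> \<Phi> \<Longrightarrow> b \<in> \<Phi> \<Longrightarrow> refl a 0 b \<in> \<Phi>" using RS by (simp add: root_system_def)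
lemma integ: "a \<in> \<Phi> \<Longrightarrow> b \<in> \<Phi> \<Longrightarrow> b \<bullet> coroot a \<in> \<int>" using RS by (simp add: root_system_def)
lemma reduced: "a \<in> \<Phi> \<Longrightarrow> t *\<^sub>R a \<in> \<Phi> \<Longrightarrow> t = 1 \<or> t = -1"
  using RS by (simp add: root_system_def)

lemma neg: "b \<in> \<Phi> \<Longrightarrow> - b \<in> \<Phi>"
  using reflc[of b b] refl_self_neg[OF nz[of b]] by simp

lemma refl0_image: "b \<in> \<Phi> \<Longrightarrow> refl b 0 ` \<Phi> = \<Phi>"
proof
  assume b: "b \<in> \<Phi>"
  show "refl b 0 ` \<Phi> \<subseteq> \<Phi>" using reflc[OF b] by auto
  show "\<Phi> \<subseteq> refl b 0 ` \<Phi>"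
  proof
    fix x assume "x \<in> \<Phi>"
    hence "refl b 0 x \<in> \<Phi>" using reflc[OF b] by simp
    moreover have "x = refl b 0 (refl b 0 x)" using refl_invol[OF nz[OF b]] by simp
    ultimately show "x \<in> refl b 0 ` \<Phi>" by blast
  qed
qed

lemma parallel_roots:
  assumes "b \<in> \<Phi>" "\<beta> \<in> \<Phi>" "\<beta> \<bullet> rot b = 0"
  shows "\<beta> = b \<or> \<beta> = - b"
proof -
  have "\<beta> = ((\<beta> \<bullet> b)/(b \<bullet> b)) *\<^sub>R b" using para_of_rot[OF nz[OF assms(1)] assms(3)] .
  moreover hence "((\<beta> \<bullet> b)/(b \<bullet> b)) = 1 \<or> ((\<beta> \<bullet> b)/(b \<bullet> b)) = -1"
    using reduced[OF assms(1)] assms(2) by metis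
  ultimately show ?thesis by (metis scaleR_minus1_left scaleR_one)
qed

definition "rep g L \<tau> \<longleftrightarrow> isomL L \<and> L ` \<Phi> = \<Phi> \<and> (\<forall>b\<in>\<Phi>. \<tau> \<bullet> b \<in> \<int>) \<and> g = (\<lambda>v. L v + \<tau>)"

lemma rep_refl:
  assumes b: "b \<in> \<Phi>"
  shows "rep (refl b k) (refl b 0) (of_int k *\<^sub>R coroot b)"
proof -
  have "\<forall>c\<in>\<Phi>. (of_int k *\<^sub>R coroot b) \<bullet> c \<in> \<int>"
    using integ[OF b] by (simp add: inner_commute)
  moreover have "refl b k = (\<lambda>v. refl b 0 v + of_int k *\<^sub>R coroot b)"
    by (rule ext) (simp add: refl_alt)
  ultimately show ?thesis
    unfolding rep_def using isomL_refl0[OF nz[OF b]] refl0_image[OF b] by simp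
qed

lemma rep_comp:
  assumes "rep g L \<tau>" "rep h M \<sigma>"
  shows "rep (g \<circ> h) (L \<circ> M) (L \<sigma> + \<tau>)"
proof -
  have L: "isomL L" "L ` \<Phi> = \<Phi>" "\<forall>b\<in>\<Phi>. \<tau> \<bullet> b \<in> \<int>" "g = (\<lambda>v. L v + \<tau>)"
    using assms(1) by (auto simp: rep_def)
  have M: "isomL M" "M ` \<Phi> = \<Phi>" "\<forall>b\<in>\<Phi>. \<sigma> \<bullet> b \<in> \<int>" "h = (\<lambda>v. M v + \<sigma>)"
    using assms(2) by (auto simp: rep_def)
  have lin: "linear L" using L(1) by (simp add: isomL_def)
  have "g \<circ> h = (\<lambda>v. (L \<circ> M) v + (L \<sigma> + \<tau>))"
    using L(4) M(4) lin by (auto simp: real_vector.linear_add)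
  moreover have "\<forall>b\<in>\<Phi>. (L \<sigma> + \<tau>) \<bullet> b \<in> \<int>"
  proof
    fix b assume b: "b \<in> \<Phi>"
    then obtain c where c: "c \<in> \<Phi>" "b = L c" using L(2) by auto
    have "L \<sigma> \<bullet> b = \<sigma> \<bullet> c" using c L(1) by (simp add: isomL_def)
    thus "(L \<sigma> + \<tau>) \<bullet> b \<in> \<int>" using M(3) c(1) L(3) b by (simp add: inner_add_left)
  qed
  moreover have "(L \<circ> M) ` \<Phi> = \<Phi>" using L(2) M(2) by (metis image_comp)
  ultimately show ?thesis unfolding rep_def using isomL_comp[OF L(1) M(1)] by simp
qed

lemma rep_id: "rep id id 0"
  by (simp add: rep_def isomL_id fun_eq_iff)

lemma affW_rep: "g \<in> affW \<Phi> \<Longrightarrow> \<exists>L \<tau>. rep g L \<tau>"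
proof (induction rule: affW.induct)
  case id then show ?case using rep_id by blast
next
  case (step r w)
  then obtain b k where r: "b \<in> \<Phi>" "r = refl b k" by (auto simp: refls_def)
  from step.IH obtain L \<tau> where "rep w L \<tau>" by blast
  then show ?case using rep_comp[OF rep_refl[OF r(1), of k]] r(2) by blast
qed

lemma refls_affW: "r \<in> refls \<Phi> \<Longrightarrow> r \<in> affW \<Phi>"
  using affW.step[OF _ affW.id, of r \<Phi>] by simp

lemma affW_comp: "g \<in> affW \<Phi> \<Longrightarrow> h \<in> affW \<Phi> \<Longrightarrow> g \<circ> h \<in> affW \<Phi>"
proof (induction rule: affW.induct)
  case id then show ?case by simp
next
  case (step r w)
  have "w \<circ> h \<in> affW \<Phi>" using step by (simp add: comp_def)
  hence "r \<circ> (w \<circ> h) \<in> affW \<Phi>" using affW.step[OF step.hyps(1)] by blast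
  then show ?case by (simp add: comp_def)
qed

lemma int_floor: "x \<in> \<int> \<Longrightarrow> of_int \<lfloor>x\<rfloor> = (x::real)"
  by (erule Ints_cases) simp

lemma rep_int: "rep g L \<tau> \<Longrightarrow> \<beta> \<in> \<Phi> \<Longrightarrow> \<tau> \<bullet> L \<beta> = of_int \<lfloor>\<tau> \<bullet> L \<beta>\<rfloor>"
proof -
  assume r: "rep g L \<tau>" and b: "\<beta> \<in> \<Phi>"
  have "L \<beta> \<in> \<Phi>" using r b by (auto simp: rep_def)
  hence "\<tau> \<bullet> L \<beta> \<in> \<int>" using r by (auto simp: rep_def)
  thus ?thesis using int_floor by simp
qed

lemma rep_inner: "rep g L \<tau> \<Longrightarrow> g v \<bullet> L \<beta> = v \<bullet> \<beta> + \<tau> \<bullet> L \<beta>"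
  unfolding rep_def isomL_def by (simp add: inner_add_left)

lemma rep_fl: "rep g L \<tau> \<Longrightarrow> \<beta> \<in> \<Phi> \<Longrightarrow> fl (L \<beta>) (g v) = fl \<beta> v + \<lfloor>\<tau> \<bullet> L \<beta>\<rfloor>"
proof -
  assume r: "rep g L \<tau>" and b: "\<beta> \<in> \<Phi>"
  have "g v \<bullet> L \<beta> = v \<bullet> \<beta> + of_int \<lfloor>\<tau> \<bullet> L \<beta>\<rfloor>"
    using rep_inner[OF r, of v \<beta>] rep_int[OF r b] by simp
  thus ?thesis unfolding fl_def by simp
qed

lemma rep_dist: "rep g L \<tau> \<Longrightarrow> dist (g u) (g v) = dist u v"
proof -
  assume r: "rep g L \<tau>"
  hence L: "isomL L" and g: "g = (\<lambda>v. L v + \<tau>)" by (auto simp: rep_def)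
  have "g u - g v = L (u - v)" using g L by (simp add: isomL_def real_vector.linear_diff)
  thus ?thesis by (simp add: dist_norm isomL_norm[OF L])
qed

lemma rep_LPhi: "rep g L \<tau> \<Longrightarrow> \<beta> \<in> \<Phi> \<Longrightarrow> L \<beta> \<in> \<Phi>"
  unfolding rep_def by auto

lemma rep_inj: "rep g L \<tau> \<Longrightarrow> inj_on L \<Phi>"
proof -
  assume "rep g L \<tau>"
  hence L: "isomL L" by (simp add: rep_def)
  show ?thesis by (rule inj_onI) (rule isomL_inj[OF L])
qed


section \<open>Alcoves\<close>

definition reg :: "pt \<Rightarrow> bool" where "reg v \<longleftrightarrow> (\<forall>\<beta>\<in>\<Phi>. \<forall>k::int. v \<bullet> \<beta> \<noteq> of_int k)"

definition K :: "pt \<Rightarrow> pt set" where "K p = {v. \<forall>\<beta>\<in>\<Phi>. of_int (fl \<beta> p) < v \<bullet> \<beta>}"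

lemma regular_iff: "v \<in> regular \<Phi> \<longleftrightarrow> reg v"
  by (auto simp: regular_def reg_def hyp_def)

lemma reg_strict: "reg v \<Longrightarrow> \<beta> \<in> \<Phi> \<Longrightarrow> of_int (fl \<beta> v) < v \<bullet> \<beta> \<and> v \<bullet> \<beta> < of_int (fl \<beta> v) + 1"
proof -
  assume r: "reg v" and b: "\<beta> \<in> \<Phi>"
  have "v \<bullet> \<beta> \<noteq> of_int (fl \<beta> v)" using r b by (simp add: reg_def)
  moreover have "of_int (fl \<beta> v) \<le> v \<bullet> \<beta>" "v \<bullet> \<beta> < of_int (fl \<beta> v) + 1"
    unfolding fl_def by linarith+
  ultimately show ?thesis by linarith
qed

lemma fl_neg: "reg v \<Longrightarrow> \<beta> \<in> \<Phi> \<Longrightarrow> fl (-\<beta>) v = - fl \<beta> v - 1"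
proof -
  assume r: "reg v" and b: "\<beta> \<in> \<Phi>"
  have "v \<bullet> \<beta> < of_int \<lfloor>v \<bullet> \<beta>\<rfloor> + 1" by (rule real_of_int_floor_add_one_gt)
  with reg_strict[OF r b] show ?thesis unfolding fl_def floor_eq_iff
    apply (simp add: inner_minus_right)
    using real_of_int_floor_add_one_gt[of "v \<bullet> \<beta>"] by linarith
qed

lemma K_fl: "reg p \<Longrightarrow> v \<in> K p \<Longrightarrow> \<beta> \<in> \<Phi> \<Longrightarrow> fl \<beta> v = fl \<beta> p"
proof -
  assume r: "reg p" and v: "v \<in> K p" and b: "\<beta> \<in> \<Phi>"
  have 1: "of_int (fl \<beta> p) < v \<bullet> \<beta>" using v b by (simp add: K_def)
  have "\<forall>\<gamma>\<in>\<Phi>. of_int (fl \<gamma> p) < v \<bullet> \<gamma>" using v by (simp add: K_def)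
  hence "of_int (fl (-\<beta>) p) < v \<bullet> (-\<beta>)" using neg[OF b] by blast
  hence 2: "v \<bullet> \<beta> < of_int (fl \<beta> p) + 1" using fl_neg[OF r b] by simp
  show ?thesis using 1 2 unfolding fl_def[of \<beta> v] floor_eq_iff by simp
qed

lemma K_reg: "reg p \<Longrightarrow> v \<in> K p \<Longrightarrow> reg v"
proof -
  assume r: "reg p" and v: "v \<in> K p"
  show "reg v" unfolding reg_def
  proof (intro ballI allI)
    fix \<beta> k assume b: "\<beta> \<in> \<Phi>"
    have 1: "of_int (fl \<beta> p) < v \<bullet> \<beta>" using v b by (simp add: K_def)
    have "\<forall>\<gamma>\<in>\<Phi>. of_int (fl \<gamma> p) < v \<bullet> \<gamma>" using v by (simp add: K_def)
  hence "of_int (fl (-\<beta>) p) < v \<bullet> (-\<beta>)" using neg[OF b] by blast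
    hence 2: "v \<bullet> \<beta> < of_int (fl \<beta> p) + 1" using fl_neg[OF r b] by simp
    show "v \<bullet> \<beta> \<noteq> of_int k"
    proof
      assume "v \<bullet> \<beta> = of_int k"
      with 1 2 have "fl \<beta> p < k" "k < fl \<beta> p + 1" by linarith+
      thus False by simp
    qed
  qed
qed

lemma same_fl_K: "reg p \<Longrightarrow> (\<forall>\<beta>\<in>\<Phi>. fl \<beta> v = fl \<beta> p) \<Longrightarrow> v \<in> K p"
proof -
  assume r: "reg p" and e: "\<forall>\<beta>\<in>\<Phi>. fl \<beta> v = fl \<beta> p"
  show "v \<in> K p" unfolding K_def
  proof (intro CollectI ballI)
    fix \<beta> assume b: "\<beta> \<in> \<Phi>"
    have a: "of_int (fl \<beta> p) \<le> v \<bullet> \<beta>" using e b unfolding fl_def by (metis of_int_floor_le)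
    have "fl (-\<beta>) v = fl (-\<beta>) p" using e neg[OF b] by blast
    hence "fl (-\<beta>) v = - fl \<beta> p - 1" using fl_neg[OF r b] by simp
    hence "v \<bullet> \<beta> \<noteq> of_int (fl \<beta> p)" unfolding fl_def by auto
    with a show "of_int (fl \<beta> p) < v \<bullet> \<beta>" by simp
  qed
qed

lemma K_self: "reg p \<Longrightarrow> p \<in> K p"
  using same_fl_K by blast

lemma K_eq: "reg p \<Longrightarrow> q \<in> K p \<Longrightarrow> K q = K p"
proof -
  assume r: "reg p" and q: "q \<in> K p"
  have "\<forall>\<beta>\<in>\<Phi>. fl \<beta> q = fl \<beta> p" using K_fl[OF r q] by blast
  thus ?thesis by (simp add: K_def)
qed

lemma K_as_Inter: "K p = (\<Inter>\<beta>\<in>\<Phi>. {v. of_int (fl \<beta> p) < \<beta> \<bullet> v})"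
  by (auto simp: K_def inner_commute)

lemma K_open: "open (K p)"
  unfolding K_as_Inter using fin by (intro open_INT) (auto intro: open_halfspace_gt)

lemma K_convex: "convex (K p)"
  unfolding K_as_Inter by (intro convex_INT) (auto intro: convex_halfspace_gt)

lemma closure_K: "v \<in> closure (K p) \<Longrightarrow> \<beta> \<in> \<Phi> \<Longrightarrow> of_int (fl \<beta> p) \<le> v \<bullet> \<beta>"
proof -
  assume v: "v \<in> closure (K p)" and b: "\<beta> \<in> \<Phi>"
  have "closure (K p) \<subseteq> {v. of_int (fl \<beta> p) \<le> \<beta> \<bullet> v}"
  proof (rule closure_minimal)
    show "K p \<subseteq> {v. of_int (fl \<beta> p) \<le> \<beta> \<bullet> v}" using b by (auto simp: K_def inner_commute less_imp_le)
    show "closed {v. of_int (fl \<beta> p) \<le> \<beta> \<bullet> v}" by (rule closed_halfspace_ge)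
  qed
  thus ?thesis using v by (auto simp: inner_commute)
qed

lemma alcove_eq:
  assumes p: "p \<in> regular \<Phi>"
  shows "connected_component_set (regular \<Phi>) p = K p"
proof
  have r: "reg p" using p regular_iff by simp
  show "K p \<subseteq> connected_component_set (regular \<Phi>) p"
    by (rule connected_component_maximal)
       (auto simp: K_self[OF r] convex_connected[OF K_convex] regular_iff intro: K_reg[OF r])
  let ?C = "connected_component_set (regular \<Phi>) p"
  let ?U = "\<Union>\<beta>\<in>\<Phi>. {v. \<beta> \<bullet> v < of_int (fl \<beta> p)}"
  have oU: "open ?U" by (intro open_UN) (auto intro: open_halfspace_lt)
  have C: "connected ?C" by simp
  have Csub: "?C \<subseteq> K p \<union> ?U"
  proof
    fix v assume v: "v \<in> ?C"
    hence rv: "reg v" using connected_component_subset regular_iff by blast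
    show "v \<in> K p \<union> ?U"
    proof (cases "v \<in> K p")
      case False
      then obtain \<beta> where b: "\<beta> \<in> \<Phi>" "\<not> of_int (fl \<beta> p) < v \<bullet> \<beta>" by (auto simp: K_def)
      have "v \<bullet> \<beta> \<noteq> of_int (fl \<beta> p)" using rv b(1) by (simp add: reg_def)
      hence "v \<bullet> \<beta> < of_int (fl \<beta> p)" using b(2) by simp
      thus ?thesis using b(1) by (auto simp: inner_commute)
    qed simp
  qed
  have dis: "K p \<inter> ?U \<inter> ?C = {}" by (auto simp: K_def inner_commute)
  have "p \<in> ?C" using p by (simp add: connected_component_refl)
  hence "K p \<inter> ?C \<noteq> {}" using K_self[OF r] by blast
  hence "?U \<inter> ?C = {}" using connectedD[OF C K_open oU dis Csub] by blast
  thus "?C \<subseteq> K p" using Csub by blast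
qed


section \<open>Counting function D\<close>

definition D :: "pt \<Rightarrow> pt \<Rightarrow> int" where "D p q = (\<Sum>\<beta>\<in>\<Phi>. \<bar>fl \<beta> p - fl \<beta> q\<bar>)"

lemma D_sym: "D p q = D q p"
  unfolding D_def by (simp add: abs_minus_commute)

lemma D_ge0: "0 \<le> D p q"
  unfolding D_def by (simp add: sum_nonneg)

lemma D_zero_iff: "D p q = 0 \<longleftrightarrow> (\<forall>\<beta>\<in>\<Phi>. fl \<beta> p = fl \<beta> q)"
  unfolding D_def using fin by (simp add: sum_nonneg_eq_0_iff)

lemma D_cong: "(\<forall>\<beta>\<in>\<Phi>. fl \<beta> p = fl \<beta> p') \<Longrightarrow> (\<forall>\<beta>\<in>\<Phi>. fl \<beta> q = fl \<beta> q') \<Longrightarrow> D p q = D p' q'"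
  unfolding D_def by (intro sum.cong) auto

lemma D_rep: "rep g L \<tau> \<Longrightarrow> D (g p) (g q) = D p q"
proof -
  assume r: "rep g L \<tau>"
  have LP: "L ` \<Phi> = \<Phi>" using r by (simp add: rep_def)
  have "D (g p) (g q) = (\<Sum>\<gamma>\<in>L ` \<Phi>. \<bar>fl \<gamma> (g p) - fl \<gamma> (g q)\<bar>)" unfolding D_def LP ..
  also have "\<dots> = (\<Sum>\<beta>\<in>\<Phi>. \<bar>fl (L \<beta>) (g p) - fl (L \<beta>) (g q)\<bar>)"
    by (subst sum.reindex[OF rep_inj[OF r]]) simp
  also have "\<dots> = D p q" unfolding D_def
    by (intro sum.cong) (auto simp: rep_fl[OF r])
  finally show ?thesis .
qed

lemma fl_rep_transport:
  assumes r: "rep g L \<tau>" and e: "\<forall>\<beta>\<in>\<Phi>. fl \<beta> p = fl \<beta> q"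
  shows "\<forall>\<beta>\<in>\<Phi>. fl \<beta> (g p) = fl \<beta> (g q)"
proof
  fix \<gamma> assume "\<gamma> \<in> \<Phi>"
  then obtain \<beta> where b: "\<beta> \<in> \<Phi>" "\<gamma> = L \<beta>" using r by (auto simp: rep_def)
  show "fl \<gamma> (g p) = fl \<gamma> (g q)" using b e rep_fl[OF r b(1)] by simp
qed

lemma reg_rep: "rep g L \<tau> \<Longrightarrow> reg v \<Longrightarrow> reg (g v)"
proof -
  assume r: "rep g L \<tau>" and v: "reg v"
  show "reg (g v)" unfolding reg_def
  proof (intro ballI allI notI)
    fix \<gamma> k assume g: "\<gamma> \<in> \<Phi>" and e: "g v \<bullet> \<gamma> = of_int k"
    then obtain \<beta> where b: "\<beta> \<in> \<Phi>" "\<gamma> = L \<beta>" using r by (auto simp: rep_def)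
    have "g v \<bullet> L \<beta> = v \<bullet> \<beta> + of_int \<lfloor>\<tau> \<bullet> L \<beta>\<rfloor>"
      using rep_inner[OF r] rep_int[OF r b(1)] by simp
    hence "v \<bullet> \<beta> = of_int (k - \<lfloor>\<tau> \<bullet> L \<beta>\<rfloor>)" using e b by simp
    thus False using v b(1) unfolding reg_def by blast
  qed
qed

lemma affW_reg: "g \<in> affW \<Phi> \<Longrightarrow> reg v \<Longrightarrow> reg (g v)"
  using affW_rep reg_rep by blast

section \<open>Wall points\<close>

definition WP :: "pt \<Rightarrow> pt \<Rightarrow> int \<Rightarrow> pt \<Rightarrow> real \<Rightarrow> bool" where
  "WP p b k w \<rho> \<longleftrightarrow> b \<in> \<Phi> \<and> w \<bullet> b = of_int k \<and> 0 < \<rho> \<and>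
     (\<forall>v. dist v w < \<rho> \<longrightarrow> of_int k < v \<bullet> b \<longrightarrow> (\<forall>\<beta>\<in>\<Phi>. fl \<beta> v = fl \<beta> p))"

lemma WP_cong: "WP p b k w \<rho> \<Longrightarrow> (\<forall>\<beta>\<in>\<Phi>. fl \<beta> p = fl \<beta> p') \<Longrightarrow> WP p' b k w \<rho>"
  unfolding WP_def by simp

lemma WP_eps:
  assumes "WP p b k w \<rho>"
  obtains \<epsilon> where "0 < \<epsilon>" "\<epsilon> * norm b < \<rho>" "\<epsilon> * (b \<bullet> b) < 1"
proof -
  have b: "b \<in> \<Phi>" and r: "0 < \<rho>" using assms by (auto simp: WP_def)
  have nb: "0 < norm b" using nz[OF b] by simp
  have bb: "b \<bullet> b = norm b * norm b" by (simp add: power2_norm_eq_inner[symmetric] power2_eq_square)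
  define \<epsilon> where "\<epsilon> = min (\<rho> / (2 * norm b)) (1 / (2 * (b \<bullet> b)))"
  have bbp: "0 < b \<bullet> b" using nb bb by simp
  have "0 < \<epsilon>" using r nb bbp by (simp add: \<epsilon>_def)
  moreover have "\<epsilon> * norm b < \<rho>"
  proof -
    have "\<epsilon> \<le> \<rho> / (2 * norm b)" by (simp add: \<epsilon>_def)
    hence "\<epsilon> * norm b \<le> \<rho> / (2 * norm b) * norm b" using nb by (intro mult_right_mono) auto
    also have "\<dots> = \<rho> / 2" using nb by simp
    finally show ?thesis using r by simp
  qed
  moreover have "\<epsilon> * (b \<bullet> b) < 1"
  proof -
    have "\<epsilon> \<le> 1 / (2 * (b \<bullet> b))" by (simp add: \<epsilon>_def)
    hence "\<epsilon> * (b \<bullet> b) \<le> 1 / (2 * (b \<bullet> b)) * (b \<bullet> b)" using bbp by (intro mult_right_mono) auto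
    also have "\<dots> = 1 / 2" using bbp by simp
    finally show ?thesis by simp
  qed
  ultimately show ?thesis using that by blast
qed

lemma dist_add_scaleR: "dist (w + t *\<^sub>R b) w = \<bar>t\<bar> * norm b"
  by (simp add: dist_norm)

lemma WP_basic:
  assumes r: "reg p" and W: "WP p b k w \<rho>"
  shows "fl b p = k" "of_int k < p \<bullet> b"
proof -
  obtain \<epsilon> where e: "0 < \<epsilon>" "\<epsilon> * norm b < \<rho>" "\<epsilon> * (b \<bullet> b) < 1" using WP_eps[OF W] by blast
  have b: "b \<in> \<Phi>" "w \<bullet> b = of_int k" using W by (auto simp: WP_def)
  let ?v = "w + \<epsilon> *\<^sub>R b"
  have vb: "?v \<bullet> b = of_int k + \<epsilon> * (b \<bullet> b)" using b by (simp add: inner_add_left)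
  have bbp: "0 < b \<bullet> b" using nz[OF b(1)] by simp
  have "dist ?v w < \<rho>" using e by (simp add: dist_add_scaleR)
  moreover have "of_int k < ?v \<bullet> b" using vb e bbp by simp
  ultimately have "\<forall>\<beta>\<in>\<Phi>. fl \<beta> ?v = fl \<beta> p" using W by (auto simp: WP_def)
  hence "fl b p = fl b ?v" using b by simp
  also have "fl b ?v = k" unfolding fl_def floor_eq_iff using vb e bbp by simp
  finally show "fl b p = k" .
  thus "of_int k < p \<bullet> b" using reg_strict[OF r b(1)] by simp
qed


lemma refl_fix: "w \<bullet> b = of_int k \<Longrightarrow> refl b k w = w"
  by (simp add: refl_def)

lemma reg_K_of_fl: "reg p \<Longrightarrow> (\<forall>\<beta>\<in>\<Phi>. fl \<beta> v = fl \<beta> p) \<Longrightarrow> reg v"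
  using same_fl_K K_reg by blast

lemma nI: "a \<in> \<Phi> \<Longrightarrow> b \<in> \<Phi> \<Longrightarrow> b \<bullet> coroot a = of_int \<lfloor>b \<bullet> coroot a\<rfloor>"
  using integ int_floor by simp

lemma WP_only:
  assumes r: "reg p" and W: "WP p b k w \<rho>" and u: "dist u w < \<rho>" and bt: "\<beta> \<in> \<Phi>"
    and uj: "u \<bullet> \<beta> = of_int j"
  shows "\<beta> = b \<or> \<beta> = - b"
proof (rule ccontr)
  assume nb: "\<not> (\<beta> = b \<or> \<beta> = - b)"
  have b: "b \<in> \<Phi>" "w \<bullet> b = of_int k" "0 < \<rho>" using W by (auto simp: WP_def)
  have Wv: "\<And>v. dist v w < \<rho> \<Longrightarrow> of_int k < v \<bullet> b \<Longrightarrow> \<forall>\<beta>\<in>\<Phi>. fl \<beta> v = fl \<beta> p"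
    using W by (auto simp: WP_def)
  let ?e = "rot \<beta>"
  have eb: "?e \<bullet> b \<noteq> 0"
  proof
    assume "?e \<bullet> b = 0"
    hence "b \<bullet> rot \<beta> = 0" by (simp add: inner_commute)
    from parallel_roots[OF bt b(1) this] nb show False by auto
  qed
  obtain u' where u': "dist u' w < \<rho>" "u' \<bullet> \<beta> = of_int j" "u' \<bullet> b \<noteq> of_int k"
  proof (cases "u \<bullet> b = of_int k")
    case False then show ?thesis using that u uj by blast
  next
    case True
    define \<delta> where "\<delta> = (\<rho> - dist u w) / (2 * (norm ?e + 1))"
    have "0 < 2 * (norm ?e + 1)" using norm_ge_zero[of ?e] by (smt (verit))
    hence dp: "0 < \<delta>" using u unfolding \<delta>_def by (intro divide_pos_pos) auto
    have "\<delta> * norm ?e \<le> \<delta> * (norm ?e + 1)" using dp by simp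
    also have "\<delta> * (norm ?e + 1) = (\<rho> - dist u w) / 2"
    proof -
      have "norm ?e + 1 \<noteq> 0" using norm_ge_zero[of ?e] by (smt (verit))
      thus ?thesis unfolding \<delta>_def by (simp add: field_simps)
    qed
    finally have de: "\<delta> * norm ?e < \<rho> - dist u w" using u by simp
    have "dist (u + \<delta> *\<^sub>R ?e) w \<le> dist u w + dist (u + \<delta> *\<^sub>R ?e) u"
      by (metis dist_commute dist_triangle)
    also have "dist (u + \<delta> *\<^sub>R ?e) u = \<delta> * norm ?e" using dp by (simp add: dist_norm)
    finally have "dist (u + \<delta> *\<^sub>R ?e) w < \<rho>" using de by simp
    moreover have "(u + \<delta> *\<^sub>R ?e) \<bullet> \<beta> = of_int j" using uj by (simp add: inner_add_left)
    moreover have "(u + \<delta> *\<^sub>R ?e) \<bullet> b \<noteq> of_int k"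
      using True dp eb by (simp add: inner_add_left)
    ultimately show ?thesis using that by blast
  qed
  show False
  proof (cases "of_int k < u' \<bullet> b")
    case True
    hence "reg u'" using Wv[OF u'(1)] reg_K_of_fl[OF r] by blast
    thus False using u'(2) bt by (simp add: reg_def)
  next
    case False
    hence lt: "u' \<bullet> b < of_int k" using u'(3) by simp
    let ?x = "refl b k u'"
    have rs: "rep (refl b k) (refl b 0) (of_int k *\<^sub>R coroot b)" using rep_refl[OF b(1)] .
    have "dist ?x w = dist ?x (refl b k w)" using refl_fix[OF b(2)] by simp
    also have "\<dots> = dist u' w" using rep_dist[OF rs] .
    finally have dx: "dist ?x w < \<rho>" using u'(1) by simp
    have "?x \<bullet> b = 2 * of_int k - u' \<bullet> b" using refl_inner_b[OF nz[OF b(1)]] .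
    hence "of_int k < ?x \<bullet> b" using lt by simp
    hence "reg ?x" using Wv[OF dx] reg_K_of_fl[OF r] by blast
    moreover have "refl b 0 \<beta> \<in> \<Phi>" using reflc[OF b(1) bt] .
    moreover have "?x \<bullet> refl b 0 \<beta> = of_int (j - k * \<lfloor>\<beta> \<bullet> coroot b\<rfloor>)"
      using refl_key[OF nz[OF b(1)], of k u' \<beta>] u'(2) nI[OF b(1) bt] by simp
    ultimately show False unfolding reg_def by blast
  qed
qed


lemma floor_between:
  fixes x1 x2 :: real
  assumes "\<lfloor>x1\<rfloor> \<noteq> \<lfloor>x2\<rfloor>"
  shows "\<exists>j::int. min x1 x2 < of_int j \<and> of_int j \<le> max x1 x2"
proof (cases "x1 \<le> x2")
  case True
  hence "\<lfloor>x1\<rfloor> < \<lfloor>x2\<rfloor>" using assms floor_mono[OF True] by linarith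
  hence "x1 < of_int \<lfloor>x2\<rfloor>" by (meson floor_less_iff)
  thus ?thesis using True by (intro exI[of _ "\<lfloor>x2\<rfloor>"]) auto
next
  case False
  hence F: "x2 \<le> x1" by simp
  hence "\<lfloor>x2\<rfloor> < \<lfloor>x1\<rfloor>" using assms floor_mono[OF F] by linarith
  hence "x2 < of_int \<lfloor>x1\<rfloor>" by (meson floor_less_iff)
  thus ?thesis using F by (intro exI[of _ "\<lfloor>x1\<rfloor>"]) auto
qed

lemma refl_shift: "b \<noteq> 0 \<Longrightarrow> w \<bullet> b = of_int k \<Longrightarrow> refl b k (w + \<epsilon> *\<^sub>R b) = w - \<epsilon> *\<^sub>R b"
proof -
  assume b: "b \<noteq> 0" and w: "w \<bullet> b = of_int k"
  have bb: "b \<bullet> b \<noteq> 0" using b by simp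
  have "refl b k (w + \<epsilon> *\<^sub>R b) = w + \<epsilon> *\<^sub>R b - (\<epsilon> * (b \<bullet> b)) *\<^sub>R ((2 / (b \<bullet> b)) *\<^sub>R b)"
    using w by (simp add: refl_def coroot_def inner_add_left)
  also have "(\<epsilon> * (b \<bullet> b)) *\<^sub>R ((2 / (b \<bullet> b)) *\<^sub>R b) = (2 * \<epsilon>) *\<^sub>R b" using bb by simp
  also have "w + \<epsilon> *\<^sub>R b - (2 * \<epsilon>) *\<^sub>R b = w - \<epsilon> *\<^sub>R b"
  proof -
    have "(2 * \<epsilon>) *\<^sub>R b = \<epsilon> *\<^sub>R b + \<epsilon> *\<^sub>R b" by (metis mult_2 scaleR_add_left)
    thus ?thesis by simp
  qed
  finally show ?thesis .
qed

lemma WP_fl: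
  assumes r: "reg p" and W: "WP p b k w \<rho>"
  shows "\<And>\<beta>. \<beta> \<in> \<Phi> \<Longrightarrow> \<beta> \<noteq> b \<Longrightarrow> \<beta> \<noteq> - b \<Longrightarrow> fl \<beta> (refl b k p) = fl \<beta> p"
    and "fl b (refl b k p) = k - 1" and "fl (- b) (refl b k p) = - k"
proof -
  obtain \<epsilon> where e: "0 < \<epsilon>" "\<epsilon> * norm b < \<rho>" "\<epsilon> * (b \<bullet> b) < 1" using WP_eps[OF W] by blast
  have b: "b \<in> \<Phi>" "w \<bullet> b = of_int k" using W by (auto simp: WP_def)
  have bbp: "0 < b \<bullet> b" using nz[OF b(1)] by simp
  let ?v = "w + \<epsilon> *\<^sub>R b"
  have vb: "?v \<bullet> b = of_int k + \<epsilon> * (b \<bullet> b)" using b by (simp add: inner_add_left)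
  have "dist ?v w < \<rho>" using e by (simp add: dist_add_scaleR)
  moreover have "of_int k < ?v \<bullet> b" using vb e bbp by simp
  ultimately have fv: "\<forall>\<beta>\<in>\<Phi>. fl \<beta> ?v = fl \<beta> p" using W by (auto simp: WP_def)
  have rs: "rep (refl b k) (refl b 0) (of_int k *\<^sub>R coroot b)" using rep_refl[OF b(1)] .
  have sv: "refl b k ?v = w - \<epsilon> *\<^sub>R b" using refl_shift[OF nz[OF b(1)] b(2)] .
  have fsv: "\<forall>\<beta>\<in>\<Phi>. fl \<beta> (refl b k p) = fl \<beta> (w - \<epsilon> *\<^sub>R b)"
    using fl_rep_transport[OF rs fv] sv by simp
  have svb: "(w - \<epsilon> *\<^sub>R b) \<bullet> b = of_int k - \<epsilon> * (b \<bullet> b)" using b by (simp add: inner_diff_left)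
  have "fl b (refl b k p) = fl b (w - \<epsilon> *\<^sub>R b)" using fsv b(1) by simp
  also have "\<dots> = k - 1" unfolding fl_def floor_eq_iff using svb e bbp by simp
  finally show "fl b (refl b k p) = k - 1" .
  have "fl (-b) (refl b k p) = fl (-b) (w - \<epsilon> *\<^sub>R b)" using fsv neg[OF b(1)] by simp
  also have "\<dots> = - k" unfolding fl_def floor_eq_iff using svb e bbp by simp
  finally show "fl (- b) (refl b k p) = - k" .
  fix \<beta> assume bt: "\<beta> \<in> \<Phi>" and n1: "\<beta> \<noteq> b" and n2: "\<beta> \<noteq> - b"
  have "fl \<beta> (w - \<epsilon> *\<^sub>R b) = fl \<beta> ?v"
  proof (rule ccontr)
    assume ne: "fl \<beta> (w - \<epsilon> *\<^sub>R b) \<noteq> fl \<beta> ?v"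
    let ?c = "b \<bullet> \<beta>" and ?a = "w \<bullet> \<beta>"
    have x1: "(w - \<epsilon> *\<^sub>R b) \<bullet> \<beta> = ?a - \<epsilon> * ?c" by (simp add: inner_diff_left)
    have x2: "?v \<bullet> \<beta> = ?a + \<epsilon> * ?c" by (simp add: inner_add_left)
    obtain j :: int where j: "min (?a - \<epsilon> * ?c) (?a + \<epsilon> * ?c) < of_int j"
      "of_int j \<le> max (?a - \<epsilon> * ?c) (?a + \<epsilon> * ?c)"
      using floor_between[of "?a - \<epsilon> * ?c" "?a + \<epsilon> * ?c"] ne x1 x2 unfolding fl_def by auto
    have c0: "?c \<noteq> 0" using j by auto
    define t where "t = (of_int j - ?a) / ?c"
    have tc: "t * ?c = of_int j - ?a" using c0 by (simp add: t_def)
    have "\<bar>t * ?c\<bar> \<le> \<epsilon> * \<bar>?c\<bar>"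
    proof (cases "?c > 0")
      case True
      hence "0 < \<epsilon> * ?c" using e(1) by simp
      thus ?thesis using j True unfolding tc by (auto simp: min_def max_def split: if_splits)
    next
      case False
      hence "?c < 0" using c0 by simp
      hence "\<epsilon> * ?c < 0" using e(1) by (simp add: mult_pos_neg)
      thus ?thesis using j False unfolding tc by (auto simp: min_def max_def split: if_splits)
    qed
    hence "\<bar>t\<bar> * \<bar>?c\<bar> \<le> \<epsilon> * \<bar>?c\<bar>" by (simp add: abs_mult)
    hence tle: "\<bar>t\<bar> \<le> \<epsilon>" using c0 by simp
    let ?u = "w + t *\<^sub>R b"
    have "dist ?u w = \<bar>t\<bar> * norm b" by (rule dist_add_scaleR)
    also have "\<dots> \<le> \<epsilon> * norm b" using tle by (simp add: mult_right_mono)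
    finally have du: "dist ?u w < \<rho>" using e(2) by simp
    have "?u \<bullet> \<beta> = of_int j" using tc by (simp add: inner_add_left)
    from WP_only[OF r W du bt this] n1 n2 show False by simp
  qed
  thus "fl \<beta> (refl b k p) = fl \<beta> p" using fsv fv bt by simp
qed


lemma norm_rot[simp]: "norm (rot b) = norm b"
  by (simp add: norm_eq_sqrt_inner)

lemma WP_closure:
  assumes r: "reg p" and W: "WP p b k w \<rho>" and z: "dist z w < \<rho>" "z \<bullet> b = of_int k"
  shows "z \<in> closure (K p)"
  unfolding closure_approachable
proof (intro allI impI)
  fix e :: real assume e: "0 < e"
  have b: "b \<in> \<Phi>" using W by (auto simp: WP_def)
  have nb: "0 < norm b" using nz[OF b] by simp
  have bbp: "0 < b \<bullet> b" using nz[OF b] by simp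
  define t where "t = min (e / (2 * norm b)) ((\<rho> - dist z w) / (2 * norm b))"
  have tp: "0 < t" using e z nb by (simp add: t_def)
  have t1: "t * norm b \<le> e / 2"
  proof -
    have "t \<le> e / (2 * norm b)" by (simp add: t_def)
    hence "t * norm b \<le> e / (2 * norm b) * norm b" using nb by (intro mult_right_mono) auto
    thus ?thesis using nb by simp
  qed
  have t2: "t * norm b \<le> (\<rho> - dist z w) / 2"
  proof -
    have "t \<le> (\<rho> - dist z w) / (2 * norm b)" by (simp add: t_def)
    hence "t * norm b \<le> (\<rho> - dist z w) / (2 * norm b) * norm b" using nb by (intro mult_right_mono) auto
    thus ?thesis using nb by simp
  qed
  let ?y = "z + t *\<^sub>R b"
  have dyz: "dist ?y z = t * norm b" using tp by (simp add: dist_add_scaleR)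
  have "dist ?y w \<le> dist ?y z + dist z w" by (rule dist_triangle)
  hence dyw: "dist ?y w < \<rho>" using dyz t2 z(1) by simp
  have "?y \<bullet> b = of_int k + t * (b \<bullet> b)" using z(2) by (simp add: inner_add_left)
  hence "of_int k < ?y \<bullet> b" using tp bbp by simp
  hence "\<forall>\<beta>\<in>\<Phi>. fl \<beta> ?y = fl \<beta> p" using W dyw by (auto simp: WP_def)
  hence "?y \<in> K p" using same_fl_K[OF r] by blast
  moreover have "dist ?y z < e" using dyz t1 e by simp
  ultimately show "\<exists>y\<in>K p. dist y z < e" by blast
qed

lemma WP_simple:
  assumes r: "reg p" and W: "WP p b k w \<rho>"
  shows "refl b k \<in> simple_refls \<Phi> (K p)"
proof -
  have b: "b \<in> \<Phi>" "w \<bullet> b = of_int k" "0 < \<rho>" using W by (auto simp: WP_def)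
  have nb: "0 < norm b" using nz[OF b(1)] by simp
  define \<delta> where "\<delta> = \<rho> / (2 * norm b)"
  have dp: "0 < \<delta>" using b nb by (simp add: \<delta>_def)
  let ?w2 = "w + \<delta> *\<^sub>R rot b"
  have "dist ?w2 w = \<delta> * norm b" using dp by (simp add: dist_norm)
  also have "\<dots> = \<rho> / 2" using nb by (simp add: \<delta>_def)
  finally have d2: "dist ?w2 w < \<rho>" using b by simp
  have h2: "?w2 \<bullet> b = of_int k" using b by (simp add: inner_add_left)
  have "rot b \<noteq> 0" using nb norm_rot[of b] by (metis norm_zero less_irrefl)
  hence ne: "w \<noteq> ?w2" using dp by simp
  have "w \<in> closure (K p) \<inter> hyp b k" using WP_closure[OF r W _ b(2)] b by (simp add: hyp_def)
  moreover have "?w2 \<in> closure (K p) \<inter> hyp b k" using WP_closure[OF r W d2 h2] h2 by (simp add: hyp_def)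
  ultimately show ?thesis unfolding simple_refls_def using b(1) ne by blast
qed

lemma simple_WP:
  assumes r: "reg p" and s: "s \<in> simple_refls \<Phi> (K p)"
  shows "\<exists>b k w \<rho>. s = refl b k \<and> WP p b k w \<rho>"
proof -
  obtain b0 k0 p1 p2 where s0: "s = refl b0 k0" "b0 \<in> \<Phi>" "p1 \<noteq> p2"
    "p1 \<in> closure (K p)" "p2 \<in> closure (K p)" "p1 \<bullet> b0 = of_int k0" "p2 \<bullet> b0 = of_int k0"
    using s unfolding simple_refls_def hyp_def by blast
  obtain b k where bk: "s = refl b k" "b \<in> \<Phi>" "p1 \<bullet> b = of_int k" "p2 \<bullet> b = of_int k" "of_int k < p \<bullet> b"
  proof (cases "of_int k0 < p \<bullet> b0")
    case True thus ?thesis using that s0 by blast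
  next
    case False
    have "p \<bullet> b0 \<noteq> of_int k0" using r s0(2) by (simp add: reg_def)
    hence "of_int (-k0) < p \<bullet> (-b0)" using False by simp
    moreover have "s = refl (-b0) (-k0)" using s0(1) refl_neg by simp
    ultimately show ?thesis using that neg[OF s0(2)] s0 by simp
  qed
  let ?m = "(1/2) *\<^sub>R (p1 + p2)"
  have mb: "?m \<bullet> b = of_int k" using bk by (simp add: inner_add_left)
  have flb: "fl b p = k"
  proof -
    have "k \<le> fl b p" using bk(5) unfolding fl_def by (simp add: le_floor_iff)
    moreover have "of_int (fl b p) \<le> p1 \<bullet> b" using closure_K[OF s0(4) bk(2)] .
    ultimately show ?thesis using bk(3) by simp
  qed
  have mgt: "of_int (fl \<beta> p) < ?m \<bullet> \<beta>" if bt: "\<beta> \<in> \<Phi>" "\<beta> \<noteq> b" for \<beta>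
  proof (rule ccontr)
    assume "\<not> of_int (fl \<beta> p) < ?m \<bullet> \<beta>"
    hence le: "?m \<bullet> \<beta> \<le> of_int (fl \<beta> p)" by simp
    have g1: "of_int (fl \<beta> p) \<le> p1 \<bullet> \<beta>" using closure_K[OF s0(4) bt(1)] .
    have g2: "of_int (fl \<beta> p) \<le> p2 \<bullet> \<beta>" using closure_K[OF s0(5) bt(1)] .
    have av: "?m \<bullet> \<beta> = (p1 \<bullet> \<beta> + p2 \<bullet> \<beta>) / 2" by (simp add: inner_add_left)
    have le': "(p1 \<bullet> \<beta> + p2 \<bullet> \<beta>) / 2 \<le> of_int (fl \<beta> p)" using le av by simp
    have e1: "p1 \<bullet> \<beta> = of_int (fl \<beta> p)" using le' g1 g2 by argo
    have e2: "p2 \<bullet> \<beta> = of_int (fl \<beta> p)" using le' g1 g2 by argo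
    let ?d = "p1 - p2"
    have dz: "?d \<noteq> 0" using s0(3) by simp
    have db: "?d \<bullet> b = 0" using bk by (simp add: inner_diff_left)
    have dbt: "?d \<bullet> \<beta> = 0" using e1 e2 by (simp add: inner_diff_left)
    have dr: "?d = ((?d \<bullet> rot b)/(b \<bullet> b)) *\<^sub>R rot b" using perp_is_rot[OF nz[OF bk(2)] db] .
    have "?d \<bullet> rot b \<noteq> 0"
    proof
      assume "?d \<bullet> rot b = 0"
      hence "?d = 0" using dr by simp
      thus False using dz by simp
    qed
    moreover have "((?d \<bullet> rot b)/(b \<bullet> b)) * (rot b \<bullet> \<beta>) = 0"
      using dbt by (subst (asm) dr) simp
    ultimately have "rot b \<bullet> \<beta> = 0" using nz[OF bk(2)] by simp
    hence "\<beta> \<bullet> rot b = 0" by (simp add: inner_commute)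
    from parallel_roots[OF bk(2) bt(1) this] bt(2) have "\<beta> = - b" by simp
    hence "?m \<bullet> \<beta> = - of_int k" using mb by simp
    moreover have "fl \<beta> p = - k - 1" using \<open>\<beta> = - b\<close> fl_neg[OF r bk(2)] flb by simp
    ultimately show False using \<open>\<not> of_int (fl \<beta> p) < ?m \<bullet> \<beta>\<close> by simp
  qed
  let ?U = "\<Inter>\<beta>\<in>\<Phi> - {b}. {v. of_int (fl \<beta> p) < \<beta> \<bullet> v}"
  have oU: "open ?U" using fin by (intro open_INT) (auto intro: open_halfspace_gt)
  have mU: "?m \<in> ?U" using mgt by (auto simp: inner_commute)
  obtain \<rho> where rho: "0 < \<rho>" "ball ?m \<rho> \<subseteq> ?U" using oU mU open_contains_ball by blast
  have "WP p b k ?m \<rho>" unfolding WP_def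
  proof (intro conjI allI impI bk(2) mb rho(1))
    fix v assume dv: "dist v ?m < \<rho>" and vb: "of_int k < v \<bullet> b"
    have "v \<in> ?U" using rho(2) dv by (auto simp: dist_commute)
    hence "v \<in> K p" using vb flb by (auto simp: K_def inner_commute)
    thus "\<forall>\<beta>\<in>\<Phi>. fl \<beta> v = fl \<beta> p" using K_fl[OF r] by blast
  qed
  thus ?thesis using bk(1) by blast
qed


lemma convex_gt:
  fixes a b c l :: real
  assumes "c < a" "c < b" "0 < l" "l \<le> 1"
  shows "c < a + l * (b - a)"
proof (cases "a \<le> b")
  case True
  hence "0 \<le> l * (b - a)" using assms by simp
  thus ?thesis using assms by linarith
next
  case False
  have "0 \<le> (1 - l) * (a - b)" using False assms by simp
  hence "b \<le> a + l * (b - a)" by (simp add: algebra_simps)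
  thus ?thesis using assms by linarith
qed

lemma wall_lemma:
  assumes r: "reg p" and rq: "reg q" and ne: "\<not> (\<forall>\<beta>\<in>\<Phi>. fl \<beta> q = fl \<beta> p)"
  shows "\<exists>b k w \<rho>. WP p b k w \<rho> \<and> q \<bullet> b < of_int k"
proof -
  define IJ where "IJ J = {v. \<forall>\<beta>\<in>J. of_int (fl \<beta> p) < v \<bullet> \<beta>}" for J
  define P where "P J \<longleftrightarrow> J \<subseteq> \<Phi> \<and> IJ J = K p" for J
  have P\<Phi>: "P \<Phi>" by (simp add: P_def IJ_def K_def)
  define n0 where "n0 = (LEAST n. \<exists>J. P J \<and> card J = n)"
  obtain J where J: "P J" "card J = n0"
    using LeastI_ex[of "\<lambda>n. \<exists>J. P J \<and> card J = n"] P\<Phi> unfolding n0_def by blast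
  have minJ: "n0 \<le> card J'" if "P J'" for J'
    unfolding n0_def using that by (intro Least_le) blast
  have JP: "J \<subseteq> \<Phi>" "IJ J = K p" using J(1) by (auto simp: P_def)
  have finJ: "finite J" using JP(1) fin finite_subset by blast
  have "q \<notin> K p"
  proof
    assume "q \<in> K p"
    hence "\<forall>\<beta>\<in>\<Phi>. fl \<beta> q = fl \<beta> p" using K_fl[OF r] by blast
    thus False using ne by simp
  qed
  hence "q \<notin> IJ J" using JP by simp
  then obtain b where bJ: "b \<in> J" and nb: "\<not> of_int (fl b p) < q \<bullet> b" by (auto simp: IJ_def)
  have b: "b \<in> \<Phi>" using bJ JP by auto
  define k where "k = fl b p"
  have qb: "q \<bullet> b < of_int k"
  proof -
    have "q \<bullet> b \<noteq> of_int k" using rq b by (simp add: reg_def)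
    thus ?thesis using nb by (simp add: k_def)
  qed
  let ?J' = "J - {b}"
  have "card ?J' < card J" using finJ bJ by (rule card_Diff1_less)
  hence "\<not> P ?J'" using minJ J(2) by fastforce
  hence "IJ ?J' \<noteq> K p" using JP(1) by (auto simp: P_def)
  moreover have "IJ J \<subseteq> IJ ?J'" by (auto simp: IJ_def)
  ultimately obtain y where y: "y \<in> IJ ?J'" "y \<notin> IJ J" using JP(2) by blast
  have yb: "y \<bullet> b \<le> of_int k"
  proof (rule ccontr)
    assume "\<not> y \<bullet> b \<le> of_int k"
    hence "y \<in> IJ J" using y(1) by (auto simp: IJ_def k_def)
    thus False using y(2) by simp
  qed
  have pK: "p \<in> K p" using K_self[OF r] .
  have pb: "of_int k < p \<bullet> b" using pK b by (simp add: K_def k_def)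
  define l where "l = (p \<bullet> b - of_int k) / (p \<bullet> b - y \<bullet> b)"
  have l0: "0 < l" using pb yb by (simp add: l_def)
  have l1: "l \<le> 1" using pb yb by (simp add: l_def)
  define w where "w = p + l *\<^sub>R (y - p)"
  have wb: "w \<bullet> b = of_int k"
  proof -
    have "w \<bullet> b = p \<bullet> b + l * (y \<bullet> b - p \<bullet> b)" by (simp add: w_def inner_add_left inner_diff_left)
    also have "l * (y \<bullet> b - p \<bullet> b) = - (p \<bullet> b - of_int k)"
      using pb yb by (simp add: l_def field_simps)
    finally show ?thesis by simp
  qed
  have oJ: "open (IJ ?J')"
  proof -
    have "IJ ?J' = (\<Inter>\<beta>\<in>?J'. {v. of_int (fl \<beta> p) < \<beta> \<bullet> v})" by (auto simp: IJ_def inner_commute)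
    moreover have "finite ?J'" using finJ by simp
    ultimately show ?thesis by (auto intro!: open_INT open_halfspace_gt)
  qed
  have wJ: "w \<in> IJ ?J'"
    unfolding IJ_def
  proof (intro CollectI ballI)
    fix \<beta> assume bt: "\<beta> \<in> ?J'"
    have a: "of_int (fl \<beta> p) < p \<bullet> \<beta>" using pK bt JP(1) by (auto simp: K_def)
    have c: "of_int (fl \<beta> p) < y \<bullet> \<beta>" using y(1) bt by (simp add: IJ_def)
    have "w \<bullet> \<beta> = p \<bullet> \<beta> + l * (y \<bullet> \<beta> - p \<bullet> \<beta>)" by (simp add: w_def inner_add_left inner_diff_left)
    thus "of_int (fl \<beta> p) < w \<bullet> \<beta>" using convex_gt[OF a c l0 l1] by simp
  qed
  obtain \<rho> where rho: "0 < \<rho>" "ball w \<rho> \<subseteq> IJ ?J'" using oJ wJ open_contains_ball by blast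
  have "WP p b k w \<rho>" unfolding WP_def
  proof (intro conjI allI impI b wb rho(1))
    fix v assume dv: "dist v w < \<rho>" and vb: "of_int k < v \<bullet> b"
    have "v \<in> IJ ?J'" using rho(2) dv by (auto simp: dist_commute)
    hence "v \<in> IJ J" using vb by (auto simp: IJ_def k_def)
    hence "v \<in> K p" using JP(2) by simp
    thus "\<forall>\<beta>\<in>\<Phi>. fl \<beta> v = fl \<beta> p" using K_fl[OF r] by blast
  qed
  thus ?thesis using qb by blast
qed

lemma sum_split_b:
  assumes b: "b \<in> \<Phi>"
  shows "(\<Sum>\<beta>\<in>\<Phi>. f \<beta>) = f b + f (-b) + (\<Sum>\<beta>\<in>\<Phi> - {b} - {-b}. f \<beta>)"
proof -
  have bb: "-b \<noteq> b"
  proof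
    assume h: "-b = b"
    have "b \<bullet> b = - (b \<bullet> b)" using h by (metis inner_minus_left)
    thus False using nz[OF b] by simp
  qed
  have "(\<Sum>\<beta>\<in>\<Phi>. f \<beta>) = f b + (\<Sum>\<beta>\<in>\<Phi> - {b}. f \<beta>)" using fin b by (simp add: sum.remove)
  also have "(\<Sum>\<beta>\<in>\<Phi> - {b}. f \<beta>) = f (-b) + (\<Sum>\<beta>\<in>\<Phi> - {b} - {-b}. f \<beta>)"
    using fin neg[OF b] bb by (intro sum.remove) auto
  finally show ?thesis by (simp add: add.assoc)
qed

lemma D_step:
  assumes r: "reg p" and W: "WP p b k w \<rho>" and rq: "reg q"
  shows "D (refl b k p) q = D p q + (if q \<bullet> b < of_int k then -2 else 2)"
proof -
  have b: "b \<in> \<Phi>" using W by (simp add: WP_def)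
  let ?p' = "refl b k p"
  have rest: "(\<Sum>\<beta>\<in>\<Phi> - {b} - {-b}. \<bar>fl \<beta> ?p' - fl \<beta> q\<bar>) = (\<Sum>\<beta>\<in>\<Phi> - {b} - {-b}. \<bar>fl \<beta> p - fl \<beta> q\<bar>)"
    using WP_fl(1)[OF r W] by (intro sum.cong) auto
  have f1: "fl b p = k" using WP_basic[OF r W] by simp
  have f2: "fl (-b) p = - k - 1" using fl_neg[OF r b] f1 by simp
  have f3: "fl b ?p' = k - 1" "fl (-b) ?p' = - k" using WP_fl(2,3)[OF r W] .
  have f4: "fl (-b) q = - fl b q - 1" using fl_neg[OF rq b] .
  have D1: "D ?p' q = \<bar>k - 1 - fl b q\<bar> + \<bar>- k + fl b q + 1\<bar> + (\<Sum>\<beta>\<in>\<Phi> - {b} - {-b}. \<bar>fl \<beta> p - fl \<beta> q\<bar>)"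
    unfolding D_def sum_split_b[OF b] rest f3 f4 by simp
  have D2: "D p q = \<bar>k - fl b q\<bar> + \<bar>- k + fl b q\<bar> + (\<Sum>\<beta>\<in>\<Phi> - {b} - {-b}. \<bar>fl \<beta> p - fl \<beta> q\<bar>)"
    unfolding D_def sum_split_b[OF b] f1 f2 f4 by simp
  show ?thesis
  proof (cases "q \<bullet> b < of_int k")
    case True
    hence "fl b q \<le> k - 1" unfolding fl_def by (simp add: floor_less_iff)
    thus ?thesis using True D1 D2 by simp
  next
    case False
    hence "q \<bullet> b \<noteq> of_int k \<Longrightarrow> of_int k < q \<bullet> b" by simp
    hence "of_int k < q \<bullet> b" using rq b by (simp add: reg_def)
    hence "k \<le> fl b q" unfolding fl_def by (simp add: le_floor_iff)
    thus ?thesis using False D1 D2 by simp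
  qed
qed


lemma reg_of_between: "(\<forall>\<beta>\<in>\<Phi>. \<exists>m::int. of_int m < v \<bullet> \<beta> \<and> v \<bullet> \<beta> < of_int m + 1) \<Longrightarrow> reg v"
  unfolding reg_def
proof (intro ballI allI notI)
  fix \<beta> j assume h: "\<forall>\<beta>\<in>\<Phi>. \<exists>m::int. of_int m < v \<bullet> \<beta> \<and> v \<bullet> \<beta> < of_int m + 1"
    and b: "\<beta> \<in> \<Phi>" and e: "v \<bullet> \<beta> = of_int j"
  then obtain m :: int where "of_int m < v \<bullet> \<beta>" "v \<bullet> \<beta> < of_int m + 1" by blast
  hence "m < j" "j < m + 1" using e by simp_all
  thus False by simp
qed

end

definition wd :: "(pt \<Rightarrow> pt) list \<Rightarrow> pt \<Rightarrow> pt" where "wd ws = foldr (\<circ>) ws id"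

lemma wd_Nil[simp]: "wd [] = id" by (simp add: wd_def)
lemma wd_Cons[simp]: "wd (s # ws) = s \<circ> wd ws" by (simp add: wd_def)
lemma wd_append: "wd (xs @ ys) = wd xs \<circ> wd ys"
  by (induction xs) (auto simp: comp_assoc)

locale alc = rs +
  fixes p0 :: pt
  assumes rp0: "reg p0"
begin

abbreviation "S \<equiv> simple_refls \<Phi> (K p0)"

lemma simple_refl: "s \<in> S \<Longrightarrow> \<exists>b k. b \<in> \<Phi> \<and> s = refl b k"
  by (auto simp: simple_refls_def)

lemma simple_refls: "s \<in> S \<Longrightarrow> s \<in> refls \<Phi>"
  unfolding refls_def using simple_refl by blast

lemma simple_invol: "s \<in> S \<Longrightarrow> s (s x) = x"
  using simple_refl refl_invol nz by blast

lemma simple_invol_fun: "s \<in> S \<Longrightarrow> s \<circ> s = id"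
  using simple_invol by auto

lemma simple_rep: "s \<in> S \<Longrightarrow> \<exists>L \<tau>. rep s L \<tau>"
  using simple_refl rep_refl by blast

lemma wd_affW: "set ws \<subseteq> S \<Longrightarrow> wd ws \<in> affW \<Phi>"
proof (induction ws)
  case Nil then show ?case by (simp only: wd_Nil) (rule affW.id)
next
  case (Cons s ws)
  have s: "s \<in> S" and sub: "set ws \<subseteq> S" using Cons.prems by auto
  have "s \<circ> wd ws \<in> affW \<Phi>" by (rule affW.step[OF simple_refls[OF s] Cons.IH[OF sub]])
  thus ?case by (simp only: wd_Cons)
qed

lemma wd_rev_inv: "set ws \<subseteq> S \<Longrightarrow> wd ws \<circ> wd (rev ws) = id \<and> wd (rev ws) \<circ> wd ws = id"
proof (induction ws)
  case Nil then show ?case by simp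
next
  case (Cons s ws)
  have s: "s \<in> S" and sub: "set ws \<subseteq> S" using Cons.prems by auto
  have IH: "wd ws \<circ> wd (rev ws) = id" "wd (rev ws) \<circ> wd ws = id" using Cons.IH[OF sub] by blast+
  have "wd (s # ws) \<circ> wd (rev (s # ws)) = s \<circ> (wd ws \<circ> wd (rev ws)) \<circ> s"
    by (simp add: wd_append comp_assoc)
  also have "\<dots> = id" using IH simple_invol_fun[OF s] by simp
  finally have 1: "wd (s # ws) \<circ> wd (rev (s # ws)) = id" .
  have "wd (rev (s # ws)) \<circ> wd (s # ws) = wd (rev ws) \<circ> (s \<circ> s) \<circ> wd ws"
    by (simp add: wd_append comp_assoc)
  also have "\<dots> = id" using IH simple_invol_fun[OF s] by simp
  finally have 2: "wd (rev (s # ws)) \<circ> wd (s # ws) = id" .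
  show ?case using 1 2 by blast
qed

lemma trans_alc:
  assumes rq: "reg q"
  shows "\<exists>ws. set ws \<subseteq> S \<and> (\<forall>\<beta>\<in>\<Phi>. fl \<beta> (wd ws p0) = fl \<beta> q)"
proof -
  have "\<forall>q. nat (D p0 q) = n \<longrightarrow> reg q \<longrightarrow> (\<exists>ws. set ws \<subseteq> S \<and> (\<forall>\<beta>\<in>\<Phi>. fl \<beta> (wd ws p0) = fl \<beta> q))" for n
  proof (induction n rule: less_induct)
    case (less n)
    show ?case
    proof (intro allI impI)
      fix q assume n: "nat (D p0 q) = n" and rq: "reg q"
      show "\<exists>ws. set ws \<subseteq> S \<and> (\<forall>\<beta>\<in>\<Phi>. fl \<beta> (wd ws p0) = fl \<beta> q)"
      proof (cases "\<forall>\<beta>\<in>\<Phi>. fl \<beta> q = fl \<beta> p0")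
        case True
        thus ?thesis by (intro exI[of _ "[]"]) simp
      next
        case False
        obtain b k w \<rho> where W: "WP p0 b k w \<rho>" and qb: "q \<bullet> b < of_int k"
          using wall_lemma[OF rp0 rq False] by blast
        have b: "b \<in> \<Phi>" using W by (simp add: WP_def)
        let ?s = "refl b k"
        have sS: "?s \<in> S" using WP_simple[OF rp0 W] .
        have rs: "rep ?s (refl b 0) (of_int k *\<^sub>R coroot b)" using rep_refl[OF b] .
        let ?q' = "?s q"
        have rq': "reg ?q'" using reg_rep[OF rs rq] .
        have "D p0 ?q' = D (?s p0) (?s ?q')" using D_rep[OF rs] by simp
        also have "?s ?q' = q" using refl_invol[OF nz[OF b]] by simp
        also have "D (?s p0) q = D p0 q - 2" using D_step[OF rp0 W rq] qb by simp
        finally have Dq: "D p0 ?q' = D p0 q - 2" .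
        have "nat (D p0 ?q') < n" using Dq n D_ge0[of p0 ?q'] by simp
        then obtain ws' where ws': "set ws' \<subseteq> S" "\<forall>\<beta>\<in>\<Phi>. fl \<beta> (wd ws' p0) = fl \<beta> ?q'"
          using less.IH rq' by blast
        have "\<forall>\<beta>\<in>\<Phi>. fl \<beta> (?s (wd ws' p0)) = fl \<beta> (?s ?q')" using fl_rep_transport[OF rs ws'(2)] .
        hence "\<forall>\<beta>\<in>\<Phi>. fl \<beta> (wd (?s # ws') p0) = fl \<beta> q" using refl_invol[OF nz[OF b]] by simp
        thus ?thesis using ws'(1) sS by (intro exI[of _ "?s # ws'"]) simp
      qed
    qed
  qed
  thus ?thesis using rq by blast
qed


lemma generic_point:
  assumes b: "b \<in> \<Phi>"
  shows "\<exists>w. w \<bullet> b = of_int k \<and> (\<forall>\<beta>\<in>\<Phi>. \<beta> \<noteq> b \<and> \<beta> \<noteq> - b \<longrightarrow> (\<forall>j::int. w \<bullet> \<beta> \<noteq> of_int j))"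
proof -
  define z0 where "z0 = (of_int k / (b \<bullet> b)) *\<^sub>R b"
  have bb: "b \<bullet> b \<noteq> 0" using nz[OF b] by simp
  have z0b: "z0 \<bullet> b = of_int k" using bb by (simp add: z0_def)
  let ?e = "rot b"
  let ?I = "\<Phi> - {b, -b}"
  have eb: "?e \<bullet> \<beta> \<noteq> 0" if "\<beta> \<in> ?I" for \<beta>
  proof
    assume "?e \<bullet> \<beta> = 0"
    hence "\<beta> \<bullet> rot b = 0" by (simp add: inner_commute)
    from parallel_roots[OF b _ this] that show False by auto
  qed
  define Bad where "Bad = (\<Union>\<beta>\<in>?I. (\<lambda>j::int. (of_int j - z0 \<bullet> \<beta>) / (?e \<bullet> \<beta>)) ` UNIV)"
  have "countable Bad" unfolding Bad_def
    using fin by (intro countable_UN) (auto intro: countable_finite)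
  hence "Bad \<noteq> UNIV" using uncountable_UNIV_real by auto
  then obtain t where t: "t \<notin> Bad" by blast
  define w where "w = z0 + t *\<^sub>R ?e"
  have wb: "w \<bullet> b = of_int k" using z0b by (simp add: w_def inner_add_left)
  have "\<forall>\<beta>\<in>\<Phi>. \<beta> \<noteq> b \<and> \<beta> \<noteq> - b \<longrightarrow> (\<forall>j::int. w \<bullet> \<beta> \<noteq> of_int j)"
  proof (intro ballI impI allI notI)
    fix \<beta> j assume bt: "\<beta> \<in> \<Phi>" "\<beta> \<noteq> b \<and> \<beta> \<noteq> - b" and e: "w \<bullet> \<beta> = of_int j"
    hence I: "\<beta> \<in> ?I" by auto
    have "z0 \<bullet> \<beta> + t * (?e \<bullet> \<beta>) = of_int j" using e by (simp add: w_def inner_add_left)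
    hence "t = (of_int j - z0 \<bullet> \<beta>) / (?e \<bullet> \<beta>)" using eb[OF I] by (simp add: field_simps)
    hence "t \<in> Bad" unfolding Bad_def using I by blast
    thus False using t by simp
  qed
  thus ?thesis using wb by blast
qed

lemma adjacent_alcove:
  assumes b: "b \<in> \<Phi>"
  shows "\<exists>q w \<rho>. reg q \<and> WP q b k w \<rho>"
proof -
  obtain w where wb: "w \<bullet> b = of_int k" and gen: "\<forall>\<beta>\<in>\<Phi>. \<beta> \<noteq> b \<and> \<beta> \<noteq> - b \<longrightarrow> (\<forall>j::int. w \<bullet> \<beta> \<noteq> of_int j)"
    using generic_point[OF b] by blast
  let ?I = "\<Phi> - {b, -b}"
  define U where "U = (\<Inter>\<beta>\<in>?I. {v. of_int (fl \<beta> w) < \<beta> \<bullet> v} \<inter> {v. \<beta> \<bullet> v < of_int (fl \<beta> w) + 1})"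
  have oU: "open U" unfolding U_def using fin
    by (intro open_INT open_Int) (auto intro: open_halfspace_gt open_halfspace_lt)
  have wU: "w \<in> U"
  proof -
    have "of_int (fl \<beta> w) < \<beta> \<bullet> w \<and> \<beta> \<bullet> w < of_int (fl \<beta> w) + 1" if "\<beta> \<in> ?I" for \<beta>
    proof -
      have "w \<bullet> \<beta> \<noteq> of_int (fl \<beta> w)" using gen that by auto
      moreover have "of_int (fl \<beta> w) \<le> w \<bullet> \<beta>" "w \<bullet> \<beta> < of_int (fl \<beta> w) + 1" unfolding fl_def by linarith+
      ultimately show ?thesis by (simp add: inner_commute)
    qed
    thus ?thesis unfolding U_def by blast
  qed
  obtain \<rho>0 where r0: "0 < \<rho>0" "ball w \<rho>0 \<subseteq> U" using oU wU open_contains_ball by blast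
  have nb: "0 < norm b" using nz[OF b] by simp
  define \<rho> where "\<rho> = min \<rho>0 (1 / norm b)"
  have rp: "0 < \<rho>" using r0 nb by (simp add: \<rho>_def)
  have rb: "\<rho> * norm b \<le> 1"
  proof -
    have "\<rho> \<le> 1 / norm b" by (simp add: \<rho>_def)
    hence "\<rho> * norm b \<le> 1 / norm b * norm b" using nb by (intro mult_right_mono) auto
    thus ?thesis using nb by simp
  qed
  have near: "\<bar>v \<bullet> b - of_int k\<bar> < 1" if "dist v w < \<rho>" for v
  proof -
    have "\<bar>(v - w) \<bullet> b\<bar> \<le> norm (v - w) * norm b" by (rule Cauchy_Schwarz_ineq2)
    also have "\<dots> < \<rho> * norm b" using that nb by (simp add: dist_norm)
    finally show ?thesis using rb wb by (simp add: inner_diff_left)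
  qed
  have inU: "v \<in> U" if "dist v w < \<rho>" for v
    using that r0(2) by (auto simp: \<rho>_def dist_commute)
  define G where "G \<beta> = (if \<beta> = b then k else if \<beta> = -b then -k-1 else fl \<beta> w)" for \<beta>
  have flG: "\<forall>\<beta>\<in>\<Phi>. fl \<beta> v = G \<beta>" if "dist v w < \<rho>" "of_int k < v \<bullet> b" for v
  proof
    fix \<beta> assume bt: "\<beta> \<in> \<Phi>"
    have nr: "\<bar>v \<bullet> b - of_int k\<bar> < 1" using near[OF that(1)] .
    show "fl \<beta> v = G \<beta>"
    proof (cases "\<beta> = b")
      case True thus ?thesis using nr that(2) unfolding G_def fl_def floor_eq_iff by auto
    next
      case F1: False
      show ?thesis
      proof (cases "\<beta> = -b")
        case True thus ?thesis using nr that(2) F1 unfolding G_def fl_def floor_eq_iff by auto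
      next
        case False
        have "v \<in> U" using inU[OF that(1)] .
        hence "of_int (fl \<beta> w) < \<beta> \<bullet> v \<and> \<beta> \<bullet> v < of_int (fl \<beta> w) + 1"
          using bt F1 False unfolding U_def by blast
        thus ?thesis using F1 False unfolding G_def fl_def[of \<beta> v] floor_eq_iff by (simp add: inner_commute)
      qed
    qed
  qed
  define \<epsilon> where "\<epsilon> = \<rho> / (2 * norm b)"
  have ep: "0 < \<epsilon>" using rp nb by (simp add: \<epsilon>_def)
  define q where "q = w + \<epsilon> *\<^sub>R b"
  have dq: "dist q w < \<rho>" using ep nb rp by (simp add: q_def dist_add_scaleR \<epsilon>_def)
  have "q \<bullet> b = of_int k + \<epsilon> * (b \<bullet> b)" using wb by (simp add: q_def inner_add_left)
  moreover have "0 < \<epsilon> * (b \<bullet> b)" using ep nz[OF b] by simp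
  ultimately have qb: "of_int k < q \<bullet> b" by simp
  have fq: "\<forall>\<beta>\<in>\<Phi>. fl \<beta> q = G \<beta>" using flG[OF dq qb] .
  have rq: "reg q"
  proof (rule reg_of_between, intro ballI)
    fix \<beta> assume bt: "\<beta> \<in> \<Phi>"
    have nr: "\<bar>q \<bullet> b - of_int k\<bar> < 1" using near[OF dq] .
    show "\<exists>m::int. of_int m < q \<bullet> \<beta> \<and> q \<bullet> \<beta> < of_int m + 1"
    proof (cases "\<beta> = b \<or> \<beta> = -b")
      case True thus ?thesis
      proof
        assume "\<beta> = b" thus ?thesis using nr qb by (intro exI[of _ k]) auto
      next
        assume "\<beta> = -b" thus ?thesis using nr qb by (intro exI[of _ "-k-1"]) auto
      qed
    next
      case False
      have "q \<in> U" using inU[OF dq] .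
      hence "of_int (fl \<beta> w) < \<beta> \<bullet> q \<and> \<beta> \<bullet> q < of_int (fl \<beta> w) + 1"
        using bt False unfolding U_def by blast
      thus ?thesis by (intro exI[of _ "fl \<beta> w"]) (simp add: inner_commute)
    qed
  qed
  have "WP q b k w \<rho>" unfolding WP_def using b wb rp flG fq by auto
  thus ?thesis using rq by blast
qed

lemma conj_refl:
  assumes r: "rep g L \<tau>" and b: "b \<in> \<Phi>"
  shows "g \<circ> refl b k = refl (L b) (k + \<lfloor>\<tau> \<bullet> L b\<rfloor>) \<circ> g"
proof
  fix v
  have L: "linear L" "\<forall>u v. L u \<bullet> L v = u \<bullet> v" and g: "g = (\<lambda>v. L v + \<tau>)" using r by (auto simp: rep_def isomL_def)
  have Lc: "L (coroot b) = coroot (L b)"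
    unfolding coroot_def using L by (simp add: linear_cmul)
  have ti: "\<tau> \<bullet> L b = of_int \<lfloor>\<tau> \<bullet> L b\<rfloor>" using rep_int[OF r b] .
  have "(g \<circ> refl b k) v = L v - (v \<bullet> b - of_int k) *\<^sub>R L (coroot b) + \<tau>"
    using g L(1) by (simp add: refl_def real_vector.linear_diff linear_cmul)
  also have "\<dots> = g v - (g v \<bullet> L b - of_int (k + \<lfloor>\<tau> \<bullet> L b\<rfloor>)) *\<^sub>R coroot (L b)"
    using Lc rep_inner[OF r, of v b] ti g by simp
  also have "\<dots> = (refl (L b) (k + \<lfloor>\<tau> \<bullet> L b\<rfloor>) \<circ> g) v" by (simp add: refl_def)
  finally show "(g \<circ> refl b k) v = (refl (L b) (k + \<lfloor>\<tau> \<bullet> L b\<rfloor>) \<circ> g) v" .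
qed

lemma WP_transport:
  assumes r: "rep g L \<tau>" and h: "\<And>x. g (h x) = x" and W: "WP p b k w \<rho>"
  shows "WP (g p) (L b) (k + \<lfloor>\<tau> \<bullet> L b\<rfloor>) (g w) \<rho>"
proof -
  have b: "b \<in> \<Phi>" "w \<bullet> b = of_int k" "0 < \<rho>" using W by (auto simp: WP_def)
  have ti: "\<tau> \<bullet> L b = of_int \<lfloor>\<tau> \<bullet> L b\<rfloor>" using rep_int[OF r b(1)] .
  show ?thesis unfolding WP_def
  proof (intro conjI allI impI)
    show "L b \<in> \<Phi>" using rep_LPhi[OF r b(1)] .
    show "g w \<bullet> L b = of_int (k + \<lfloor>\<tau> \<bullet> L b\<rfloor>)" using rep_inner[OF r, of w b] b(2) ti by simp
    show "0 < \<rho>" using b(3) .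
    fix v assume dv: "dist v (g w) < \<rho>" and vb: "of_int (k + \<lfloor>\<tau> \<bullet> L b\<rfloor>) < v \<bullet> L b"
    let ?x = "h v"
    have gx: "g ?x = v" using h .
    have "dist ?x w < \<rho>" using dv rep_dist[OF r, of ?x w] gx by simp
    moreover have "of_int k < ?x \<bullet> b" using vb rep_inner[OF r, of ?x b] gx ti by simp
    ultimately have "\<forall>\<beta>\<in>\<Phi>. fl \<beta> ?x = fl \<beta> p" using W by (auto simp: WP_def)
    from fl_rep_transport[OF r this] show "\<forall>\<beta>\<in>\<Phi>. fl \<beta> v = fl \<beta> (g p)" using gx by simp
  qed
qed

lemma refl_word:
  assumes b: "b \<in> \<Phi>"
  shows "\<exists>ws. set ws \<subseteq> S \<and> refl b k = wd ws"
proof -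
  obtain q w \<rho> where q: "reg q" "WP q b k w \<rho>" using adjacent_alcove[OF b] by blast
  obtain ws where ws: "set ws \<subseteq> S" "\<forall>\<beta>\<in>\<Phi>. fl \<beta> (wd ws p0) = fl \<beta> q" using trans_alc[OF q(1)] by blast
  let ?u = "wd ws" and ?u' = "wd (rev ws)"
  have inv: "?u \<circ> ?u' = id" "?u' \<circ> ?u = id" using wd_rev_inv[OF ws(1)] by auto
  have inv1: "\<And>x. ?u (?u' x) = x" and inv2: "\<And>x. ?u' (?u x) = x" using inv by (auto simp: fun_eq_iff)
  have "set (rev ws) \<subseteq> S" using ws(1) by simp
  obtain L' \<tau>' where r': "rep ?u' L' \<tau>'" using affW_rep[OF wd_affW[OF \<open>set (rev ws) \<subseteq> S\<close>]] by blast
  obtain L \<tau> where r: "rep ?u L \<tau>" using affW_rep[OF wd_affW[OF ws(1)]] by blast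
  define b' where "b' = L' b"
  define k' where "k' = k + \<lfloor>\<tau>' \<bullet> L' b\<rfloor>"
  have W1: "WP (?u' q) b' k' (?u' w) \<rho>" unfolding b'_def k'_def
    by (rule WP_transport[OF r' inv2 q(2)])
  have "\<forall>\<beta>\<in>\<Phi>. fl \<beta> (?u' (?u p0)) = fl \<beta> (?u' q)" using fl_rep_transport[OF r' ws(2)] .
  hence "\<forall>\<beta>\<in>\<Phi>. fl \<beta> (?u' q) = fl \<beta> p0" using inv2 by simp
  hence W2: "WP p0 b' k' (?u' w) \<rho>" using WP_cong[OF W1] by blast
  have sS: "refl b' k' \<in> S" using WP_simple[OF rp0 W2] .
  have b'P: "b' \<in> \<Phi>" using W2 by (simp add: WP_def)
  have Llin: "linear L" and Liso: "\<forall>x y. L x \<bullet> L y = x \<bullet> y" and ueq: "?u = (\<lambda>v. L v + \<tau>)"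
    using r by (auto simp: rep_def isomL_def)
  have L'lin: "linear L'" and u'eq: "?u' = (\<lambda>v. L' v + \<tau>')" using r' by (auto simp: rep_def isomL_def)
  have comp: "L (L' v + \<tau>') + \<tau> = v" for v using inv1[of v] ueq u'eq by simp
  have t0: "L \<tau>' + \<tau> = 0" using comp[of 0] L'lin Llin by (simp add: real_vector.linear_0)
  have LL: "L (L' v) = v" for v
  proof -
    have "(L \<tau>' + \<tau>) + L (L' v) = v" using comp[of v] Llin
      by (simp add: real_vector.linear_add add.assoc add.left_commute add.commute)
    thus ?thesis using t0 by simp
  qed
  have Lb': "L b' = b" using LL by (simp add: b'_def)
  have "\<tau>' \<bullet> L' b = L \<tau>' \<bullet> L (L' b)" using Liso by simp
  also have "\<dots> = - (\<tau> \<bullet> b)" using t0 LL by (simp add: eq_neg_iff_add_eq_0[symmetric])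
  finally have tt: "\<tau>' \<bullet> L' b = - (\<tau> \<bullet> b)" .
  have tb: "\<tau> \<bullet> b \<in> \<int>"
  proof -
    have "\<tau> \<bullet> L b' \<in> \<int>" using r b'P rep_LPhi[OF r b'P] by (auto simp: rep_def)
    thus ?thesis using Lb' by simp
  qed
  have kk: "k' + \<lfloor>\<tau> \<bullet> L b'\<rfloor> = k"
  proof -
    obtain n where n: "\<tau> \<bullet> b = of_int n" using tb by (auto elim: Ints_cases)
    show ?thesis unfolding k'_def tt Lb' n by simp
  qed
  have cj: "?u \<circ> refl b' k' = refl b k \<circ> ?u" using conj_refl[OF r b'P, of k'] Lb' kk by simp
  have "refl b k = refl b k \<circ> (?u \<circ> ?u')" using inv by simp
  also have "\<dots> = (?u \<circ> refl b' k') \<circ> ?u'" using cj by (simp add: comp_assoc)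
  also have "\<dots> = wd (ws @ [refl b' k'] @ rev ws)" by (simp add: wd_append comp_assoc)
  finally show ?thesis using ws(1) sS by (intro exI[of _ "ws @ [refl b' k'] @ rev ws"]) auto
qed

lemma affW_word: "g \<in> affW \<Phi> \<Longrightarrow> \<exists>ws. set ws \<subseteq> S \<and> g = wd ws"
proof (induction rule: affW.induct)
  case id then show ?case by (intro exI[of _ "[]"]) simp
next
  case (step r w)
  obtain b k where rb: "b \<in> \<Phi>" "r = refl b k" using step.hyps(1) by (auto simp: refls_def)
  obtain rs where rs: "set rs \<subseteq> S" "r = wd rs" using refl_word[OF rb(1)] rb(2) by blast
  obtain ws where ws: "set ws \<subseteq> S" "w = wd ws" using step.IH by blast
  show ?case using rs ws by (intro exI[of _ "rs @ ws"]) (simp add: wd_append)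
qed


definition sep :: "pt \<Rightarrow> pt \<Rightarrow> pt \<Rightarrow> int \<Rightarrow> bool" where
  "sep x y b k \<longleftrightarrow> (x \<bullet> b < of_int k \<and> of_int k < y \<bullet> b) \<or> (y \<bullet> b < of_int k \<and> of_int k < x \<bullet> b)"

lemma sep_rep:
  assumes r: "rep g L \<tau>" and b: "b \<in> \<Phi>"
  shows "sep x y b k \<longleftrightarrow> sep (g x) (g y) (L b) (k + \<lfloor>\<tau> \<bullet> L b\<rfloor>)"
proof -
  have ti: "\<tau> \<bullet> L b = of_int \<lfloor>\<tau> \<bullet> L b\<rfloor>" using rep_int[OF r b] .
  have gx: "g x \<bullet> L b = x \<bullet> b + of_int \<lfloor>\<tau> \<bullet> L b\<rfloor>" using rep_inner[OF r, of x b] ti by simp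
  have gy: "g y \<bullet> L b = y \<bullet> b + of_int \<lfloor>\<tau> \<bullet> L b\<rfloor>" using rep_inner[OF r, of y b] ti by simp
  show ?thesis unfolding sep_def gx gy by auto
qed

lemma sep_fl: "sep x y b k \<Longrightarrow> fl b x \<noteq> fl b y"
proof -
  assume "sep x y b k"
  thus ?thesis unfolding sep_def
  proof
    assume h: "x \<bullet> b < of_int k \<and> of_int k < y \<bullet> b"
    hence "fl b x < k" "k \<le> fl b y" unfolding fl_def by (auto simp: floor_less_iff le_floor_iff)
    thus ?thesis by simp
  next
    assume h: "y \<bullet> b < of_int k \<and> of_int k < x \<bullet> b"
    hence "fl b y < k" "k \<le> fl b x" unfolding fl_def by (auto simp: floor_less_iff le_floor_iff)
    thus ?thesis by simp
  qed
qed

lemma exchange: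
  assumes "set ws \<subseteq> S" "b \<in> \<Phi>" "sep p0 (wd ws p0) b k"
  shows "\<exists>i<length ws. refl b k \<circ> wd ws = wd (take i ws @ drop (Suc i) ws)"
  using assms
proof (induction ws arbitrary: b k)
  case Nil
  thus ?case by (auto simp: sep_def)
next
  case (Cons s ws')
  have sS: "s \<in> S" and sub: "set ws' \<subseteq> S" using Cons.prems by auto
  obtain c j w0 \<rho>0 where sc: "s = refl c j" and W: "WP p0 c j w0 \<rho>0" using simple_WP[OF rp0 sS] by blast
  have c: "c \<in> \<Phi>" using W by (simp add: WP_def)
  let ?\<tau> = "of_int j *\<^sub>R coroot c"
  have rs: "rep s (refl c 0) ?\<tau>" using rep_refl[OF c] sc by simp
  define b' where "b' = refl c 0 b"
  define k' where "k' = k + \<lfloor>?\<tau> \<bullet> b'\<rfloor>"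
  have b'P: "b' \<in> \<Phi>" using reflc[OF c Cons.prems(2)] by (simp add: b'_def)
  have inv: "s \<circ> s = id" using simple_invol_fun[OF sS] .
  have inv': "\<And>x. s (s x) = x" using simple_invol[OF sS] .
  have cj: "s \<circ> refl b k = refl b' k' \<circ> s" using conj_refl[OF rs Cons.prems(2), of k] by (simp add: b'_def k'_def)
  have com: "refl b k \<circ> s = s \<circ> refl b' k'"
  proof -
    have "refl b k \<circ> s = (s \<circ> s) \<circ> (refl b k \<circ> s)" using inv by simp
    also have "\<dots> = s \<circ> (s \<circ> refl b k) \<circ> s" by (simp add: comp_assoc)
    also have "\<dots> = s \<circ> refl b' k' \<circ> (s \<circ> s)" using cj by (simp add: comp_assoc)
    finally show ?thesis using inv by simp
  qed
  let ?x = "wd ws' p0"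
  have sp: "sep p0 (s ?x) b k" using Cons.prems(3) by simp
  hence sp': "sep (s p0) ?x b' k'"
    using sep_rep[OF rs Cons.prems(2), of p0 "s ?x" k] inv' by (simp add: b'_def k'_def)
  show ?case
  proof (cases "sep p0 ?x b' k'")
    case True
    obtain i where i: "i < length ws'" "refl b' k' \<circ> wd ws' = wd (take i ws' @ drop (Suc i) ws')"
      using Cons.IH[OF sub b'P True] by blast
    have "refl b k \<circ> wd (s # ws') = (refl b k \<circ> s) \<circ> wd ws'" by (simp add: comp_assoc)
    also have "\<dots> = s \<circ> (refl b' k' \<circ> wd ws')" using com by (simp add: comp_assoc)
    also have "\<dots> = wd (take (Suc i) (s # ws') @ drop (Suc (Suc i)) (s # ws'))" using i(2) by simp
    finally have e: "refl b k \<circ> wd (s # ws') = wd (take (Suc i) (s # ws') @ drop (Suc (Suc i)) (s # ws'))" .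
    have "Suc i < length (s # ws')" using i(1) by simp
    thus ?thesis using e by blast
  next
    case False
    have r1: "p0 \<bullet> b' \<noteq> of_int k'" using rp0 b'P by (simp add: reg_def)
    have sp0: "sep p0 (s p0) b' k'" using sp' False r1 unfolding sep_def by auto
    have ne: "fl b' p0 \<noteq> fl b' (s p0)" using sep_fl[OF sp0] .
    have bc: "b' = c \<or> b' = - c" using WP_fl(1)[OF rp0 W b'P] ne sc by auto
    have f1: "fl c p0 = j" using WP_basic[OF rp0 W] by simp
    have f2: "fl c (s p0) = j - 1" using WP_fl(2)[OF rp0 W] sc by simp
    have rsp: "reg (s p0)" using reg_rep[OF rs rp0] .
    have st1: "of_int (fl c p0) < p0 \<bullet> c \<and> p0 \<bullet> c < of_int (fl c p0) + 1" using reg_strict[OF rp0 c] .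
    have st2: "of_int (fl c (s p0)) < s p0 \<bullet> c \<and> s p0 \<bullet> c < of_int (fl c (s p0)) + 1" using reg_strict[OF rsp c] .
    have "refl b' k' = s"
    proof (cases "b' = c")
      case True
      have "of_int j - 1 < (of_int k' :: real)" "(of_int k' :: real) < of_int j + 1"
        using sp0 st1 st2 f1 f2 True unfolding sep_def by auto
      hence "k' = j" by simp
      thus ?thesis using True sc by simp
    next
      case False
      hence bm: "b' = - c" using bc by simp
      have "- of_int j - 1 < (of_int k' :: real)" "(of_int k' :: real) < - of_int j + 1"
        using sp0 st1 st2 f1 f2 bm unfolding sep_def by auto
      hence "k' = - j" by simp
      thus ?thesis using bm sc refl_neg by simp
    qed
    hence "refl b k \<circ> s = id" using com inv by simp
    hence e: "refl b k \<circ> wd (s # ws') = wd ws'" by (simp add: comp_assoc[symmetric])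
    have "wd ws' = wd (take 0 (s # ws') @ drop (Suc 0) (s # ws'))" by simp
    hence "refl b k \<circ> wd (s # ws') = wd (take 0 (s # ws') @ drop (Suc 0) (s # ws'))" using e by simp
    moreover have "0 < length (s # ws')" by simp
    ultimately show ?thesis by blast
  qed
qed

lemma D_simple_step:
  assumes sS: "s \<in> S" and rx: "reg x"
  shows "D p0 (s x) = D p0 x + 2 \<or> (D p0 (s x) = D p0 x - 2 \<and> (\<exists>c j. c \<in> \<Phi> \<and> s = refl c j \<and> sep p0 x c j))"
proof -
  obtain c j w0 \<rho>0 where sc: "s = refl c j" and W: "WP p0 c j w0 \<rho>0" using simple_WP[OF rp0 sS] by blast
  have c: "c \<in> \<Phi>" using W by (simp add: WP_def)
  have rs: "rep s (refl c 0) (of_int j *\<^sub>R coroot c)" using rep_refl[OF c] sc by simp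
  have "D p0 (s x) = D (s p0) (s (s x))" using D_rep[OF rs] by simp
  also have "\<dots> = D (s p0) x" using simple_invol[OF sS] by simp
  also have "\<dots> = D p0 x + (if x \<bullet> c < of_int j then -2 else 2)" using D_step[OF rp0 W rx] sc by simp
  finally have e: "D p0 (s x) = D p0 x + (if x \<bullet> c < of_int j then -2 else 2)" .
  have pc: "of_int j < p0 \<bullet> c" using WP_basic[OF rp0 W] by simp
  show ?thesis
  proof (cases "x \<bullet> c < of_int j")
    case True
    hence "sep p0 x c j" using pc by (simp add: sep_def)
    thus ?thesis using e True sc c by auto
  qed (use e in simp)
qed

lemma D_upper: "set ws \<subseteq> S \<Longrightarrow> D p0 (wd ws p0) \<le> 2 * int (length ws)"
proof (induction ws)
  case Nil then show ?case by (simp add: D_def)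
next
  case (Cons s ws)
  have sS: "s \<in> S" and sub: "set ws \<subseteq> S" using Cons.prems by auto
  have rx: "reg (wd ws p0)" using affW_reg[OF wd_affW[OF sub] rp0] .
  show ?case using D_simple_step[OF sS rx] Cons.IH[OF sub] by auto
qed

lemma D_exact:
  "set ws \<subseteq> S \<Longrightarrow> (\<forall>ws2. set ws2 \<subseteq> S \<longrightarrow> wd ws2 = wd ws \<longrightarrow> length ws \<le> length ws2)
   \<Longrightarrow> D p0 (wd ws p0) = 2 * int (length ws)"
proof (induction ws)
  case Nil then show ?case by (simp add: D_def)
next
  case (Cons s ws)
  have sS: "s \<in> S" and sub: "set ws \<subseteq> S" using Cons.prems by auto
  have minw: "\<forall>ws2. set ws2 \<subseteq> S \<longrightarrow> wd ws2 = wd ws \<longrightarrow> length ws \<le> length ws2"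
  proof (intro allI impI)
    fix ws2 assume a: "set ws2 \<subseteq> S" "wd ws2 = wd ws"
    have "set (s # ws2) \<subseteq> S" "wd (s # ws2) = wd (s # ws)" using a sS by auto
    thus "length ws \<le> length ws2" using Cons.prems(2) by fastforce
  qed
  have IH: "D p0 (wd ws p0) = 2 * int (length ws)" using Cons.IH[OF sub minw] .
  have rx: "reg (wd ws p0)" using affW_reg[OF wd_affW[OF sub] rp0] .
  show ?case
  proof (cases "D p0 (s (wd ws p0)) = D p0 (wd ws p0) + 2")
    case True thus ?thesis using IH by simp
  next
    case False
    then obtain c j where cj: "c \<in> \<Phi>" "s = refl c j" "sep p0 (wd ws p0) c j"
      using D_simple_step[OF sS rx] by blast
    obtain i where i: "i < length ws" "refl c j \<circ> wd ws = wd (take i ws @ drop (Suc i) ws)"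
      using exchange[OF sub cj(1) cj(3)] by blast
    let ?ws2 = "take i ws @ drop (Suc i) ws"
    have "set ?ws2 \<subseteq> S" using sub set_take_subset[of i ws] set_drop_subset[of "Suc i" ws] by auto
    moreover have "wd ?ws2 = wd (s # ws)" using i(2) cj(2) by simp
    ultimately have "length (s # ws) \<le> length ?ws2" using Cons.prems(2) by blast
    moreover have "length ?ws2 < length (s # ws)" using i(1) by simp
    ultimately show ?thesis by simp
  qed
qed

lemma len_eq:
  assumes g: "g \<in> affW \<Phi>"
  shows "2 * int (len \<Phi> (K p0) g) = D p0 (g p0)"
proof -
  let ?P = "\<lambda>n. \<exists>ws. length ws = n \<and> set ws \<subseteq> S \<and> g = foldr (\<circ>) ws id"
  obtain ws0 where "set ws0 \<subseteq> S" "g = wd ws0" using affW_word[OF g] by blast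
  hence ex: "?P (length ws0)" by (auto simp: wd_def)
  obtain ws where ws: "length ws = len \<Phi> (K p0) g" "set ws \<subseteq> S" "g = wd ws"
  proof -
    have "\<exists>n. ?P n" using ex by blast
    from LeastI_ex[OF this] show ?thesis using that unfolding len_def wd_def by blast
  qed
  have "\<forall>ws2. set ws2 \<subseteq> S \<longrightarrow> wd ws2 = wd ws \<longrightarrow> length ws \<le> length ws2"
  proof (intro allI impI)
    fix ws2 assume "set ws2 \<subseteq> S" "wd ws2 = wd ws"
    hence "?P (length ws2)" using ws(3) by (auto simp: wd_def)
    thus "length ws \<le> length ws2" unfolding ws(1) len_def by (rule Least_le)
  qed
  from D_exact[OF ws(2) this] show ?thesis using ws by simp
qed


lemma floor_int_minus:
  fixes x :: real
  assumes "\<forall>j::int. x \<noteq> of_int j"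
  shows "\<lfloor>of_int i - x\<rfloor> = i - \<lfloor>x\<rfloor> - 1"
proof -
  have "of_int \<lfloor>x\<rfloor> \<noteq> x" using assms by metis
  hence "of_int \<lfloor>x\<rfloor> < x" by (simp add: order.not_eq_order_implies_strict)
  moreover have "x < of_int \<lfloor>x\<rfloor> + 1" by (rule real_of_int_floor_add_one_gt)
  ultimately show ?thesis unfolding floor_eq_iff by (simp; linarith)
qed

lemma intlemA:
  fixes n P k m e es ea :: int
  assumes "e = 0 \<or> e = -1" "es = 0 \<or> es = -1" "ea = 0 \<or> ea = -1"
    "0 \<le> n \<Longrightarrow> m \<le> k \<and> k \<le> m + n" "n \<le> 0 \<Longrightarrow> m + n \<le> k \<and> k \<le> m"
    "0 < n \<Longrightarrow> ea = 0 \<Longrightarrow> \<not>(e = -1 \<and> es = -1)" "0 < n \<Longrightarrow> ea = -1 \<Longrightarrow> \<not>(e = 0 \<and> es = 0)"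
    "n < 0 \<Longrightarrow> ea = 0 \<Longrightarrow> \<not>(e = 0 \<and> es = 0)" "n < 0 \<Longrightarrow> ea = -1 \<Longrightarrow> \<not>(e = -1 \<and> es = -1)"
    "n = 0 \<Longrightarrow> e \<noteq> es"
    "(0 \<le> n \<longrightarrow> P \<le> -2*n) \<and> (n \<le> 0 \<longrightarrow> -2*n \<le> P) \<or> (P = -n \<and> ea = 0)"
  shows "\<bar>m+n-e\<bar> - \<bar>k-e\<bar> + \<bar>P+n-k-1-es\<bar> - \<bar>P-m-1-es\<bar> \<le> 0"
  using assms by (smt (verit))

lemma intlemB:
  fixes n P k m e es ea :: int
  assumes "e = 0 \<or> e = -1" "es = 0 \<or> es = -1" "ea = 0 \<or> ea = -1"
    "0 \<le> n \<Longrightarrow> m \<le> k \<and> k \<le> m + n" "n \<le> 0 \<Longrightarrow> m + n \<le> k \<and> k \<le> m"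
    "0 < n \<Longrightarrow> ea = 0 \<Longrightarrow> \<not>(e = -1 \<and> es = -1)" "0 < n \<Longrightarrow> ea = -1 \<Longrightarrow> \<not>(e = 0 \<and> es = 0)"
    "n < 0 \<Longrightarrow> ea = 0 \<Longrightarrow> \<not>(e = 0 \<and> es = 0)" "n < 0 \<Longrightarrow> ea = -1 \<Longrightarrow> \<not>(e = -1 \<and> es = -1)"
    "n = 0 \<Longrightarrow> e \<noteq> es"
    "(P = -n \<and> ea = -1) \<or> P = 0 \<or> ((0 \<le> n \<longrightarrow> n \<le> P) \<and> (n \<le> 0 \<longrightarrow> P \<le> n))"
  shows "0 \<le> \<bar>k+n-e\<bar> - \<bar>m+n-e\<bar> + \<bar>P+n-m-1-es\<bar> - \<bar>P+n-k-1-es\<bar>"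
    and "\<bar>k+n-e\<bar> - \<bar>m+n-e\<bar> + \<bar>P+n-m-1-es\<bar> - \<bar>P+n-k-1-es\<bar> = 0 \<Longrightarrow>
         \<bar>k-e\<bar> - \<bar>m-e\<bar> + \<bar>P-m-1-es\<bar> - \<bar>P-k-1-es\<bar> = 0"
  using assms by (smt (verit))+

lemma e_range:
  assumes z: "0 \<in> closure (K p0)" and b: "\<beta> \<in> \<Phi>"
  shows "fl \<beta> p0 = 0 \<or> fl \<beta> p0 = -1"
proof -
  have "of_int (fl \<beta> p0) \<le> (0::pt) \<bullet> \<beta>" using closure_K[OF z b] .
  hence 1: "fl \<beta> p0 \<le> 0" by simp
  have "of_int (fl (-\<beta>) p0) \<le> (0::pt) \<bullet> (-\<beta>)" using closure_K[OF z neg[OF b]] .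
  hence "fl (-\<beta>) p0 \<le> 0" by simp
  hence "-1 \<le> fl \<beta> p0" using fl_neg[OF rp0 b] by simp
  thus ?thesis using 1 by auto
qed

lemma e_sign:
  assumes b: "\<beta> \<in> \<Phi>"
  shows "fl \<beta> p0 = 0 \<Longrightarrow> 0 < p0 \<bullet> \<beta>" and "fl \<beta> p0 = -1 \<Longrightarrow> p0 \<bullet> \<beta> < 0"
  using reg_strict[OF rp0 b] by auto

lemma refl0_neg: "refl b 0 (- x) = - refl b 0 x"
  by (simp add: refl_def)


lemma beta_data:
  assumes al: "\<alpha> \<in> \<Phi>" and ra: "reg a" and th: "of_int c < a \<bullet> \<alpha>" "a \<bullet> \<alpha> < of_int c + 1"
    and b: "\<beta> \<in> \<Phi>"
  defines "Y \<equiv> refl \<alpha> c a" and "Z \<equiv> refl \<alpha> (c+1) a" and "T \<equiv> refl \<alpha> (c+2) (refl \<alpha> (c+1) a)"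
    and "st \<equiv> refl \<alpha> 0 (-\<beta>)" and "n \<equiv> \<lfloor>\<beta> \<bullet> coroot \<alpha>\<rfloor>"
  shows "fl \<beta> Z = fl \<beta> Y + n" "fl \<beta> T = fl \<beta> a + n"
    "0 \<le> n \<Longrightarrow> fl \<beta> Y \<le> fl \<beta> a \<and> fl \<beta> a \<le> fl \<beta> Y + n"
    "n \<le> 0 \<Longrightarrow> fl \<beta> Y + n \<le> fl \<beta> a \<and> fl \<beta> a \<le> fl \<beta> Y"
    "fl st Y = n*c - fl \<beta> a - 1" "fl st a = n*c - fl \<beta> Y - 1"
    "fl st Z = n*c + n - fl \<beta> a - 1" "fl st T = n*c + n - fl \<beta> Y - 1"
    "p0 \<bullet> st = of_int n * (p0 \<bullet> \<alpha>) - p0 \<bullet> \<beta>"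
    "st \<in> \<Phi>"
proof -
  let ?c = "coroot \<alpha>"
  have an: "\<alpha> \<noteq> 0" using nz[OF al] .
  have nn0: "of_int n = \<beta> \<bullet> ?c" unfolding n_def using nI[OF al b] by simp
  have nn: "of_int n = ?c \<bullet> \<beta>" using nn0 by (simp add: inner_commute)
  have ac: "?c \<bullet> \<alpha> = 2" using coroot_inner[OF an] .
  define \<theta> where "\<theta> = a \<bullet> \<alpha> - of_int c"
  have t0: "0 < \<theta>" "\<theta> < 1" using th by (auto simp: \<theta>_def)
  have Yi: "Y \<bullet> v = a \<bullet> v - \<theta> * (?c \<bullet> v)" for v
    by (simp add: Y_def refl_def \<theta>_def inner_diff_left)
  have Zi: "Z \<bullet> v = a \<bullet> v - (\<theta> - 1) * (?c \<bullet> v)" for v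
    by (simp add: Z_def refl_def \<theta>_def inner_diff_left algebra_simps)
  have Za: "Z \<bullet> \<alpha> = a \<bullet> \<alpha> - (\<theta> - 1) * 2" using Zi[of \<alpha>] ac by simp
  have Ti: "T \<bullet> v = a \<bullet> v + ?c \<bullet> v" for v
  proof -
    have TZ: "T = refl \<alpha> (c+2) Z" unfolding T_def Z_def ..
    have "T \<bullet> v = Z \<bullet> v - (Z \<bullet> \<alpha> - of_int (c+2)) * (?c \<bullet> v)"
      unfolding TZ by (simp add: refl_def inner_diff_left)
    also have "\<dots> = a \<bullet> v + ?c \<bullet> v"
      unfolding Za Zi[of v] by (simp add: \<theta>_def algebra_simps)
    finally show ?thesis .
  qed
  have sti: "v \<bullet> st = (?c \<bullet> \<beta>) * (v \<bullet> \<alpha>) - v \<bullet> \<beta>" for v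
  proof -
    have "v \<bullet> st = - (v \<bullet> \<beta>) + (\<beta> \<bullet> \<alpha>) * (v \<bullet> ?c)"
      by (simp add: st_def refl_def inner_diff_right)
    also have "(\<beta> \<bullet> \<alpha>) * (v \<bullet> ?c) = (?c \<bullet> \<beta>) * (v \<bullet> \<alpha>)"
      by (simp add: coroot_def inner_commute)
    finally show ?thesis by simp
  qed
  have rs: "rep (refl \<alpha> c) (refl \<alpha> 0) (of_int c *\<^sub>R ?c)" using rep_refl[OF al] .
  have rY: "reg Y" unfolding Y_def using reg_rep[OF rs ra] .
  have nia: "\<forall>j::int. a \<bullet> \<beta> \<noteq> of_int j" using ra b by (simp add: reg_def)
  have niY: "\<forall>j::int. Y \<bullet> \<beta> \<noteq> of_int j" using rY b by (simp add: reg_def)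
  have Yb: "Y \<bullet> \<beta> = a \<bullet> \<beta> - \<theta> * of_int n" using Yi[of \<beta>] nn by simp
  have Zb: "Z \<bullet> \<beta> = Y \<bullet> \<beta> + of_int n" using Zi[of \<beta>] Yb nn by (simp add: algebra_simps)
  have Tb: "T \<bullet> \<beta> = a \<bullet> \<beta> + of_int n" using Ti[of \<beta>] nn by simp
  show "fl \<beta> Z = fl \<beta> Y + n" unfolding fl_def Zb by simp
  show "fl \<beta> T = fl \<beta> a + n" unfolding fl_def Tb by simp
  show "0 \<le> n \<Longrightarrow> fl \<beta> Y \<le> fl \<beta> a \<and> fl \<beta> a \<le> fl \<beta> Y + n"
  proof -
    assume n0: "0 \<le> n"
    have "0 \<le> \<theta> * of_int n" using t0 n0 by simp
    moreover have "\<theta> * of_int n \<le> 1 * of_int n" using t0 n0 by (intro mult_right_mono) auto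
    ultimately have "Y \<bullet> \<beta> \<le> a \<bullet> \<beta>" "a \<bullet> \<beta> \<le> Y \<bullet> \<beta> + of_int n" using Yb by simp_all
    hence "\<lfloor>Y \<bullet> \<beta>\<rfloor> \<le> \<lfloor>a \<bullet> \<beta>\<rfloor>" "\<lfloor>a \<bullet> \<beta>\<rfloor> \<le> \<lfloor>Y \<bullet> \<beta> + of_int n\<rfloor>"
      by (meson floor_mono)+
    thus ?thesis unfolding fl_def by simp
  qed
  show "n \<le> 0 \<Longrightarrow> fl \<beta> Y + n \<le> fl \<beta> a \<and> fl \<beta> a \<le> fl \<beta> Y"
  proof -
    assume n0: "n \<le> 0"
    have "\<theta> * of_int n \<le> 0" using t0 n0 by (simp add: mult_nonneg_nonpos)
    moreover have "1 * of_int n \<le> \<theta> * of_int n" using t0 n0 by (intro mult_right_mono_neg) auto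
    ultimately have "a \<bullet> \<beta> \<le> Y \<bullet> \<beta>" "Y \<bullet> \<beta> + of_int n \<le> a \<bullet> \<beta>" using Yb by simp_all
    hence "\<lfloor>a \<bullet> \<beta>\<rfloor> \<le> \<lfloor>Y \<bullet> \<beta>\<rfloor>" "\<lfloor>Y \<bullet> \<beta> + of_int n\<rfloor> \<le> \<lfloor>a \<bullet> \<beta>\<rfloor>"
      by (meson floor_mono)+
    thus ?thesis unfolding fl_def by simp
  qed
  have Ya: "Y \<bullet> \<alpha> = a \<bullet> \<alpha> - \<theta> * 2" using Yi[of \<alpha>] ac by simp
  have Ta: "T \<bullet> \<alpha> = a \<bullet> \<alpha> + 2" using Ti[of \<alpha>] ac by simp
  have e1: "Y \<bullet> st = of_int (n*c) - a \<bullet> \<beta>"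
    using sti[of Y] Ya Yb nn[symmetric] by (simp add: \<theta>_def algebra_simps)
  show "fl st Y = n*c - fl \<beta> a - 1" unfolding fl_def e1 by (rule floor_int_minus[OF nia])
  have e2: "a \<bullet> st = of_int (n*c) - Y \<bullet> \<beta>"
    using sti[of a] Yb nn[symmetric] by (simp add: \<theta>_def algebra_simps)
  show "fl st a = n*c - fl \<beta> Y - 1" unfolding fl_def e2 by (rule floor_int_minus[OF niY])
  have e3: "Z \<bullet> st = of_int (n*c + n) - a \<bullet> \<beta>"
    using sti[of Z] Za Zb Yb nn[symmetric] by (simp add: \<theta>_def algebra_simps)
  show "fl st Z = n*c + n - fl \<beta> a - 1" unfolding fl_def e3 by (rule floor_int_minus[OF nia])
  have e4: "T \<bullet> st = of_int (n*c + n) - Y \<bullet> \<beta>"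
    using sti[of T] Ta Tb Yb nn[symmetric] by (simp add: \<theta>_def algebra_simps)
  show "fl st T = n*c + n - fl \<beta> Y - 1" unfolding fl_def e4 by (rule floor_int_minus[OF niY])
  show "p0 \<bullet> st = of_int n * (p0 \<bullet> \<alpha>) - p0 \<bullet> \<beta>" using sti[of p0] nn by simp
  show "st \<in> \<Phi>" unfolding st_def using reflc[OF al neg[OF b]] .
qed


lemma mulA: "(c::int) \<le> -2 \<Longrightarrow> (0 \<le> n \<longrightarrow> n*c \<le> -2*n) \<and> (n \<le> 0 \<longrightarrow> -2*n \<le> n*c)"
proof -
  assume c: "c \<le> -2"
  have "0 \<le> n \<Longrightarrow> n*c \<le> n*(-2)" using c by (intro mult_left_mono) auto
  moreover have "n \<le> 0 \<Longrightarrow> n*(-2) \<le> n*c" using c by (intro mult_left_mono_neg) auto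
  ultimately show ?thesis by (auto simp: mult.commute)
qed

lemma mulB: "1 \<le> (c::int) \<Longrightarrow> (0 \<le> n \<longrightarrow> n \<le> n*c) \<and> (n \<le> 0 \<longrightarrow> n*c \<le> n)"
proof -
  assume c: "1 \<le> c"
  have "0 \<le> n \<Longrightarrow> n*1 \<le> n*c" using c by (intro mult_left_mono) auto
  moreover have "n \<le> 0 \<Longrightarrow> n*c \<le> n*1" using c by (intro mult_left_mono_neg) auto
  ultimately show ?thesis by auto
qed

lemma main_D:
  assumes z: "0 \<in> closure (K p0)" and al: "\<alpha> \<in> \<Phi>" and ra: "reg a"
    and th: "of_int c < a \<bullet> \<alpha>" "a \<bullet> \<alpha> < of_int c + 1"
    and h1: "D p0 (refl \<alpha> (c+2) (refl \<alpha> (c+1) a)) = D p0 (refl \<alpha> (c+1) a) + 2"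
    and h2: "D p0 (refl \<alpha> (c+1) a) = D p0 a + 2"
  shows "D p0 (refl \<alpha> c a) = D p0 a + 2 \<or> D p0 (refl \<alpha> c a) + 2 = D p0 a"
proof -
  define Y where "Y = refl \<alpha> c a"
  define Z where "Z = refl \<alpha> (c+1) a"
  define T where "T = refl \<alpha> (c+2) (refl \<alpha> (c+1) a)"
  define st where "st \<beta> = refl \<alpha> 0 (-\<beta>)" for \<beta>
  define G where "G v \<beta> = \<bar>fl \<beta> v - fl \<beta> p0\<bar>" for v \<beta>
  define ea where "ea = fl \<alpha> p0"
  have an: "\<alpha> \<noteq> 0" using nz[OF al] .
  have st_in: "st \<beta> \<in> \<Phi>" if "\<beta> \<in> \<Phi>" for \<beta> unfolding st_def using reflc[OF al neg[OF that]] .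
  have st_st: "st (st \<beta>) = \<beta>" for \<beta>
    unfolding st_def using refl_invol[OF an, of 0 \<beta>] by (simp add: refl0_neg)
  have reidx: "(\<Sum>\<beta>\<in>\<Phi>. h (st \<beta>)) = (\<Sum>\<beta>\<in>\<Phi>. h \<beta>)" for h :: "pt \<Rightarrow> int"
    by (rule sum.reindex_bij_witness[of _ st st]) (auto simp: st_st st_in)
  have Dsum: "2 * D p0 v = (\<Sum>\<beta>\<in>\<Phi>. G v \<beta> + G v (st \<beta>))" for v
  proof -
    have "D p0 v = (\<Sum>\<beta>\<in>\<Phi>. G v \<beta>)" unfolding D_def G_def by (simp add: abs_minus_commute)
    moreover have "(\<Sum>\<beta>\<in>\<Phi>. G v \<beta> + G v (st \<beta>)) = (\<Sum>\<beta>\<in>\<Phi>. G v \<beta>) + (\<Sum>\<beta>\<in>\<Phi>. G v (st \<beta>))"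
      by (rule sum.distrib)
    ultimately show ?thesis using reidx[of "G v"] by simp
  qed
  define Q where "Q v w \<beta> = (G w \<beta> + G w (st \<beta>)) - (G v \<beta> + G v (st \<beta>))" for v w \<beta>
  have Qsum: "2 * (D p0 w - D p0 v) = (\<Sum>\<beta>\<in>\<Phi>. Q v w \<beta>)" for v w
    unfolding Q_def sum_subtractf using Dsum[of v] Dsum[of w] by simp
  have rs: "\<And>j. rep (refl \<alpha> j) (refl \<alpha> 0) (of_int j *\<^sub>R coroot \<alpha>)" using rep_refl[OF al] by blast
  have rY: "reg Y" unfolding Y_def using reg_rep[OF rs ra] .
  have rZ: "reg Z" unfolding Z_def using reg_rep[OF rs ra] .
  have rT: "reg T" unfolding T_def using reg_rep[OF rs reg_rep[OF rs ra]] .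
  have ea_r: "ea = 0 \<or> ea = -1" unfolding ea_def using e_range[OF z al] .
  have data: "\<exists>n k m e es. G Y \<beta> = \<bar>m - e\<bar> \<and> G a \<beta> = \<bar>k - e\<bar> \<and> G Z \<beta> = \<bar>m + n - e\<bar> \<and> G T \<beta> = \<bar>k + n - e\<bar>
      \<and> G Y (st \<beta>) = \<bar>n*c - k - 1 - es\<bar> \<and> G a (st \<beta>) = \<bar>n*c - m - 1 - es\<bar>
      \<and> G Z (st \<beta>) = \<bar>n*c + n - k - 1 - es\<bar> \<and> G T (st \<beta>) = \<bar>n*c + n - m - 1 - es\<bar>
      \<and> (e = 0 \<or> e = -1) \<and> (es = 0 \<or> es = -1)
      \<and> (0 \<le> n \<longrightarrow> m \<le> k \<and> k \<le> m + n) \<and> (n \<le> 0 \<longrightarrow> m + n \<le> k \<and> k \<le> m)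
      \<and> (0 < n \<longrightarrow> ea = 0 \<longrightarrow> \<not>(e = -1 \<and> es = -1)) \<and> (0 < n \<longrightarrow> ea = -1 \<longrightarrow> \<not>(e = 0 \<and> es = 0))
      \<and> (n < 0 \<longrightarrow> ea = 0 \<longrightarrow> \<not>(e = 0 \<and> es = 0)) \<and> (n < 0 \<longrightarrow> ea = -1 \<longrightarrow> \<not>(e = -1 \<and> es = -1))
      \<and> (n = 0 \<longrightarrow> e \<noteq> es)" if b: "\<beta> \<in> \<Phi>" for \<beta>
  proof -
    note bd = beta_data[OF al ra th b]
    define n where "n = \<lfloor>\<beta> \<bullet> coroot \<alpha>\<rfloor>"
    define k where "k = fl \<beta> a"
    define m where "m = fl \<beta> Y"
    define e where "e = fl \<beta> p0"
    define es where "es = fl (st \<beta>) p0"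
    have sb: "st \<beta> \<in> \<Phi>" using st_in[OF b] .
    have er: "e = 0 \<or> e = -1" unfolding e_def using e_range[OF z b] .
    have esr: "es = 0 \<or> es = -1" unfolding es_def using e_range[OF z sb] .
    have pst: "p0 \<bullet> st \<beta> = of_int n * (p0 \<bullet> \<alpha>) - p0 \<bullet> \<beta>" using bd(9) by (simp add: st_def n_def)
    have sg: "e = 0 \<Longrightarrow> 0 < p0 \<bullet> \<beta>" "e = -1 \<Longrightarrow> p0 \<bullet> \<beta> < 0"
      "es = 0 \<Longrightarrow> 0 < p0 \<bullet> st \<beta>" "es = -1 \<Longrightarrow> p0 \<bullet> st \<beta> < 0"
      "ea = 0 \<Longrightarrow> 0 < p0 \<bullet> \<alpha>" "ea = -1 \<Longrightarrow> p0 \<bullet> \<alpha> < 0"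
      using e_sign[OF b] e_sign[OF sb] e_sign[OF al] by (auto simp: e_def es_def ea_def)
    have c1: "0 < n \<longrightarrow> ea = 0 \<longrightarrow> \<not>(e = -1 \<and> es = -1)"
    proof (intro impI notI)
      assume "0 < n" "ea = 0" "e = -1 \<and> es = -1"
      hence "0 < of_int n * (p0 \<bullet> \<alpha>)" using sg by simp
      thus False using sg pst \<open>e = -1 \<and> es = -1\<close> by auto
    qed
    have c2: "0 < n \<longrightarrow> ea = -1 \<longrightarrow> \<not>(e = 0 \<and> es = 0)"
    proof (intro impI notI)
      assume "0 < n" "ea = -1" "e = 0 \<and> es = 0"
      hence "of_int n * (p0 \<bullet> \<alpha>) < 0" using sg by (simp add: mult_pos_neg)
      thus False using sg pst \<open>e = 0 \<and> es = 0\<close> by auto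
    qed
    have c3: "n < 0 \<longrightarrow> ea = 0 \<longrightarrow> \<not>(e = 0 \<and> es = 0)"
    proof (intro impI notI)
      assume "n < 0" "ea = 0" "e = 0 \<and> es = 0"
      hence "of_int n * (p0 \<bullet> \<alpha>) < 0" using sg by (simp add: mult_neg_pos)
      thus False using sg pst \<open>e = 0 \<and> es = 0\<close> by auto
    qed
    have c4: "n < 0 \<longrightarrow> ea = -1 \<longrightarrow> \<not>(e = -1 \<and> es = -1)"
    proof (intro impI notI)
      assume "n < 0" "ea = -1" "e = -1 \<and> es = -1"
      hence "0 < of_int n * (p0 \<bullet> \<alpha>)" using sg by (simp add: mult_neg_neg)
      thus False using sg pst \<open>e = -1 \<and> es = -1\<close> by auto
    qed
    have c5: "n = 0 \<longrightarrow> e \<noteq> es"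
    proof (intro impI notI)
      assume "n = 0" "e = es"
      hence "p0 \<bullet> st \<beta> = - (p0 \<bullet> \<beta>)" using pst by simp
      thus False using sg er \<open>e = es\<close> by auto
    qed
    have G1: "G Y \<beta> = \<bar>m - e\<bar>" "G a \<beta> = \<bar>k - e\<bar>" unfolding G_def m_def k_def e_def by simp_all
    have G2: "G Z \<beta> = \<bar>m + n - e\<bar>" "G T \<beta> = \<bar>k + n - e\<bar>"
      unfolding G_def m_def k_def e_def n_def using bd(1,2) by (simp_all add: Z_def T_def Y_def)
    have G3: "G Y (st \<beta>) = \<bar>n*c - k - 1 - es\<bar>" "G a (st \<beta>) = \<bar>n*c - m - 1 - es\<bar>"
      "G Z (st \<beta>) = \<bar>n*c + n - k - 1 - es\<bar>" "G T (st \<beta>) = \<bar>n*c + n - m - 1 - es\<bar>"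
      unfolding G_def m_def k_def es_def n_def using bd(5-8) by (simp_all add: Z_def T_def Y_def st_def)
    have bnd: "(0 \<le> n \<longrightarrow> m \<le> k \<and> k \<le> m + n) \<and> (n \<le> 0 \<longrightarrow> m + n \<le> k \<and> k \<le> m)"
      using bd(3,4) unfolding m_def k_def n_def Y_def by simp
    show ?thesis using G1 G2 G3 er esr bnd c1 c2 c3 c4 c5 by blast
  qed
  show ?thesis
  proof (cases "c \<le> -2 \<or> (c = -1 \<and> ea = 0)")
    case True
    have "Q a Z \<beta> \<le> 0" if b: "\<beta> \<in> \<Phi>" for \<beta>
    proof -
      obtain n k m e es where d: "G Y \<beta> = \<bar>m - e\<bar> \<and> G a \<beta> = \<bar>k - e\<bar> \<and> G Z \<beta> = \<bar>m + n - e\<bar> \<and> G T \<beta> = \<bar>k + n - e\<bar>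
      \<and> G Y (st \<beta>) = \<bar>n*c - k - 1 - es\<bar> \<and> G a (st \<beta>) = \<bar>n*c - m - 1 - es\<bar>
      \<and> G Z (st \<beta>) = \<bar>n*c + n - k - 1 - es\<bar> \<and> G T (st \<beta>) = \<bar>n*c + n - m - 1 - es\<bar>
      \<and> (e = 0 \<or> e = -1) \<and> (es = 0 \<or> es = -1)
      \<and> (0 \<le> n \<longrightarrow> m \<le> k \<and> k \<le> m + n) \<and> (n \<le> 0 \<longrightarrow> m + n \<le> k \<and> k \<le> m)
      \<and> (0 < n \<longrightarrow> ea = 0 \<longrightarrow> \<not>(e = -1 \<and> es = -1)) \<and> (0 < n \<longrightarrow> ea = -1 \<longrightarrow> \<not>(e = 0 \<and> es = 0))
      \<and> (n < 0 \<longrightarrow> ea = 0 \<longrightarrow> \<not>(e = 0 \<and> es = 0)) \<and> (n < 0 \<longrightarrow> ea = -1 \<longrightarrow> \<not>(e = -1 \<and> es = -1))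
      \<and> (n = 0 \<longrightarrow> e \<noteq> es)" using data[OF b] by blast
      have rel: "(0 \<le> n \<longrightarrow> n*c \<le> -2*n) \<and> (n \<le> 0 \<longrightarrow> -2*n \<le> n*c) \<or> (n*c = -n \<and> ea = 0)"
        using True mulA[of c n] by auto
      have "\<bar>m+n-e\<bar> - \<bar>k-e\<bar> + \<bar>n*c+n-k-1-es\<bar> - \<bar>n*c-m-1-es\<bar> \<le> 0"
        by (rule intlemA[of e es ea n m k "n*c"]) (use d ea_r rel in auto)
      thus ?thesis unfolding Q_def using d by simp
    qed
    hence "(\<Sum>\<beta>\<in>\<Phi>. Q a Z \<beta>) \<le> 0" by (simp add: sum_nonpos)
    moreover have "2 * (D p0 Z - D p0 a) = (\<Sum>\<beta>\<in>\<Phi>. Q a Z \<beta>)" by (rule Qsum)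
    ultimately show ?thesis using h2 unfolding Z_def by simp
  next
    case False
    have QB: "0 \<le> Q Z T \<beta> \<and> (Q Z T \<beta> = 0 \<longrightarrow> Q Y a \<beta> = 0)" if b: "\<beta> \<in> \<Phi>" for \<beta>
    proof -
      obtain n k m e es where d: "G Y \<beta> = \<bar>m - e\<bar> \<and> G a \<beta> = \<bar>k - e\<bar> \<and> G Z \<beta> = \<bar>m + n - e\<bar> \<and> G T \<beta> = \<bar>k + n - e\<bar>
      \<and> G Y (st \<beta>) = \<bar>n*c - k - 1 - es\<bar> \<and> G a (st \<beta>) = \<bar>n*c - m - 1 - es\<bar>
      \<and> G Z (st \<beta>) = \<bar>n*c + n - k - 1 - es\<bar> \<and> G T (st \<beta>) = \<bar>n*c + n - m - 1 - es\<bar>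
      \<and> (e = 0 \<or> e = -1) \<and> (es = 0 \<or> es = -1)
      \<and> (0 \<le> n \<longrightarrow> m \<le> k \<and> k \<le> m + n) \<and> (n \<le> 0 \<longrightarrow> m + n \<le> k \<and> k \<le> m)
      \<and> (0 < n \<longrightarrow> ea = 0 \<longrightarrow> \<not>(e = -1 \<and> es = -1)) \<and> (0 < n \<longrightarrow> ea = -1 \<longrightarrow> \<not>(e = 0 \<and> es = 0))
      \<and> (n < 0 \<longrightarrow> ea = 0 \<longrightarrow> \<not>(e = 0 \<and> es = 0)) \<and> (n < 0 \<longrightarrow> ea = -1 \<longrightarrow> \<not>(e = -1 \<and> es = -1))
      \<and> (n = 0 \<longrightarrow> e \<noteq> es)" using data[OF b] by blast
      have rel: "(n*c = -n \<and> ea = -1) \<or> n*c = 0 \<or> ((0 \<le> n \<longrightarrow> n \<le> n*c) \<and> (n \<le> 0 \<longrightarrow> n*c \<le> n))"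
      proof -
        have "c = -1 \<and> ea = -1 \<or> c = 0 \<or> 1 \<le> c" using False ea_r by auto
        thus ?thesis using mulB[of c n] by auto
      qed
      have i1: "0 \<le> \<bar>k+n-e\<bar> - \<bar>m+n-e\<bar> + \<bar>n*c+n-m-1-es\<bar> - \<bar>n*c+n-k-1-es\<bar>"
        by (rule intlemB(1)[of e es ea n m k "n*c"]) (use d ea_r rel in auto)
      have i2: "\<bar>k+n-e\<bar> - \<bar>m+n-e\<bar> + \<bar>n*c+n-m-1-es\<bar> - \<bar>n*c+n-k-1-es\<bar> = 0 \<Longrightarrow>
         \<bar>k-e\<bar> - \<bar>m-e\<bar> + \<bar>n*c-m-1-es\<bar> - \<bar>n*c-k-1-es\<bar> = 0"
        by (rule intlemB(2)[of e es ea n m k "n*c"]) (use d ea_r rel in auto)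
      have qz: "Q Z T \<beta> = \<bar>k+n-e\<bar> - \<bar>m+n-e\<bar> + \<bar>n*c+n-m-1-es\<bar> - \<bar>n*c+n-k-1-es\<bar>"
        unfolding Q_def using d by simp
      have qy: "Q Y a \<beta> = \<bar>k-e\<bar> - \<bar>m-e\<bar> + \<bar>n*c-m-1-es\<bar> - \<bar>n*c-k-1-es\<bar>"
        unfolding Q_def using d by simp
      show ?thesis unfolding qz qy using i1 i2 by blast
    qed
    have Ya: "Y \<bullet> \<alpha> = 2 * of_int c - a \<bullet> \<alpha>" unfolding Y_def using refl_inner_b[OF an] .
    have Za: "Z \<bullet> \<alpha> = 2 * of_int (c+1) - a \<bullet> \<alpha>" unfolding Z_def using refl_inner_b[OF an] .
    have Ta: "T \<bullet> \<alpha> = a \<bullet> \<alpha> + 2"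
      unfolding T_def using refl_inner_b[OF an, of "c+2" "refl \<alpha> (c+1) a"] Za by (simp add: Z_def)
    have fa: "fl \<alpha> Y = c - 1" "fl \<alpha> a = c" "fl \<alpha> Z = c + 1" "fl \<alpha> T = c + 2"
      unfolding fl_def floor_eq_iff using th Ya Za Ta by auto
    have sta: "st \<alpha> = \<alpha>" unfolding st_def using refl_self_neg[OF an] refl0_neg[of \<alpha> \<alpha>] by simp
    have stma: "st (-\<alpha>) = -\<alpha>" unfolding st_def using refl_self_neg[OF an] by simp
    have Gm: "G v (-\<alpha>) = G v \<alpha>" if "reg v" for v
      unfolding G_def using fl_neg[OF that al] fl_neg[OF rp0 al] by simp
    have Qa: "Q Z T \<alpha> = 2 * (\<bar>c + 2 - ea\<bar> - \<bar>c + 1 - ea\<bar>)" "Q Y a \<alpha> = 2 * (\<bar>c - ea\<bar> - \<bar>c - 1 - ea\<bar>)"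
      unfolding Q_def sta G_def fa ea_def[symmetric] by simp_all
    have Qma: "Q Z T (-\<alpha>) = Q Z T \<alpha>" "Q Y a (-\<alpha>) = Q Y a \<alpha>"
      unfolding Q_def stma sta using Gm rY rZ rT ra by simp_all
    have cB: "0 \<le> c + 1 - ea" using False ea_r by auto
    have Q2a: "Q Z T \<alpha> = 2" using Qa(1) cB by simp
    have "2 * (D p0 T - D p0 Z) = (\<Sum>\<beta>\<in>\<Phi>. Q Z T \<beta>)" by (rule Qsum)
    also have "\<dots> = Q Z T \<alpha> + Q Z T (-\<alpha>) + (\<Sum>\<beta>\<in>\<Phi> - {\<alpha>} - {-\<alpha>}. Q Z T \<beta>)" by (rule sum_split_b[OF al])
    finally have "(\<Sum>\<beta>\<in>\<Phi> - {\<alpha>} - {-\<alpha>}. Q Z T \<beta>) = 0"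
      using h1 Q2a Qma unfolding T_def Z_def by simp
    moreover have "\<forall>\<beta>\<in>\<Phi> - {\<alpha>} - {-\<alpha>}. 0 \<le> Q Z T \<beta>" using QB by blast
    moreover have "finite (\<Phi> - {\<alpha>} - {-\<alpha>})" using fin by simp
    ultimately have "\<forall>\<beta>\<in>\<Phi> - {\<alpha>} - {-\<alpha>}. Q Z T \<beta> = 0"
      using sum_nonneg_eq_0_iff[of "\<Phi> - {\<alpha>} - {-\<alpha>}" "Q Z T"] by blast
    hence z0: "\<forall>\<beta>\<in>\<Phi> - {\<alpha>} - {-\<alpha>}. Q Y a \<beta> = 0" using QB by blast
    have "2 * (D p0 a - D p0 Y) = (\<Sum>\<beta>\<in>\<Phi>. Q Y a \<beta>)" by (rule Qsum)
    also have "\<dots> = Q Y a \<alpha> + Q Y a (-\<alpha>) + (\<Sum>\<beta>\<in>\<Phi> - {\<alpha>} - {-\<alpha>}. Q Y a \<beta>)" by (rule sum_split_b[OF al])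
    also have "(\<Sum>\<beta>\<in>\<Phi> - {\<alpha>} - {-\<alpha>}. Q Y a \<beta>) = 0" using z0 by simp
    finally have "2 * (D p0 a - D p0 Y) = 4 * (\<bar>c - ea\<bar> - \<bar>c - 1 - ea\<bar>)" using Qa(2) Qma(2) by simp
    moreover have "\<bar>c - ea\<bar> - \<bar>c - 1 - ea\<bar> = 1 \<or> \<bar>c - ea\<bar> - \<bar>c - 1 - ea\<bar> = -1" by arith
    ultimately show ?thesis unfolding Y_def by auto
  qed
qed

end

theorem theorem1p3:
  fixes \<Phi> A0 :: "pt set" and \<alpha> :: pt and c :: int and x :: "pt \<Rightarrow> pt"
  assumes "root_system \<Phi>"
    and "is_alcove \<Phi> A0" and "0 \<in> closure A0"
    and "\<alpha> \<in> \<Phi>"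
    and "x \<in> affW \<Phi>"
    and "x ` A0 \<subseteq> {v. of_int c \<le> v \<bullet> \<alpha> \<and> v \<bullet> \<alpha> \<le> of_int c + 1}"
    and "len \<Phi> A0 (refl \<alpha> (c + 2) \<circ> refl \<alpha> (c + 1) \<circ> x) = len \<Phi> A0 (refl \<alpha> (c + 1) \<circ> x) + 1"
    and "len \<Phi> A0 (refl \<alpha> (c + 1) \<circ> x) = len \<Phi> A0 x + 1"
  shows "len \<Phi> A0 (refl \<alpha> c \<circ> x) = len \<Phi> A0 x + 1 \<or> len \<Phi> A0 (refl \<alpha> c \<circ> x) + 1 = len \<Phi> A0 x"
proof -
  interpret rs \<Phi> using assms(1) by unfold_locales
  obtain p where p: "p \<in> regular \<Phi>" "A0 = connected_component_set (regular \<Phi>) p"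
    using assms(2) unfolding is_alcove_def by blast
  have rp: "reg p" using p(1) regular_iff by simp
  have A0: "A0 = K p" using p alcove_eq by simp
  interpret alc \<Phi> p by unfold_locales (rule rp)
  have z: "0 \<in> closure (K p)" using assms(3) A0 by simp
  have al: "\<alpha> \<in> \<Phi>" by (rule assms(4))
  have x: "x \<in> affW \<Phi>" by (rule assms(5))
  let ?a = "x p"
  have ra: "reg ?a" using affW_reg[OF x rp] .
  have "?a \<in> x ` A0" using K_self[OF rp] A0 by simp
  hence ab: "of_int c \<le> ?a \<bullet> \<alpha>" "?a \<bullet> \<alpha> \<le> of_int c + 1" using assms(6) by auto
  have "?a \<bullet> \<alpha> \<noteq> of_int c" "?a \<bullet> \<alpha> \<noteq> of_int (c + 1)" using ra al unfolding reg_def by blast+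
  hence th: "of_int c < ?a \<bullet> \<alpha>" "?a \<bullet> \<alpha> < of_int c + 1" using ab by auto
  have rW: "refl \<alpha> j \<in> affW \<Phi>" for j using refls_affW[of "refl \<alpha> j"] al by (auto simp: refls_def)
  have LD: "2 * int (len \<Phi> A0 g) = D p (g p)" if "g \<in> affW \<Phi>" for g
    using len_eq[OF that] A0 by simp
  have g0: "refl \<alpha> c \<circ> x \<in> affW \<Phi>" using affW_comp[OF rW x] .
  have g2: "refl \<alpha> (c+1) \<circ> x \<in> affW \<Phi>" using affW_comp[OF rW x] .
  have g1: "refl \<alpha> (c+2) \<circ> refl \<alpha> (c+1) \<circ> x \<in> affW \<Phi>" using affW_comp[OF affW_comp[OF rW rW] x] .
  have L0: "2 * int (len \<Phi> A0 (refl \<alpha> c \<circ> x)) = D p (refl \<alpha> c ?a)" using LD[OF g0] by simp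
  have L1: "2 * int (len \<Phi> A0 (refl \<alpha> (c+2) \<circ> refl \<alpha> (c+1) \<circ> x)) = D p (refl \<alpha> (c+2) (refl \<alpha> (c+1) ?a))"
    using LD[OF g1] by simp
  have L2: "2 * int (len \<Phi> A0 (refl \<alpha> (c+1) \<circ> x)) = D p (refl \<alpha> (c+1) ?a)" using LD[OF g2] by simp
  have Lx: "2 * int (len \<Phi> A0 x) = D p ?a" using LD[OF x] by simp
  have h1: "D p (refl \<alpha> (c+2) (refl \<alpha> (c+1) ?a)) = D p (refl \<alpha> (c+1) ?a) + 2"
    using assms(7) L1 L2 by simp
  have h2: "D p (refl \<alpha> (c+1) ?a) = D p ?a + 2" using assms(8) L2 Lx by simp
  have "D p (refl \<alpha> c ?a) = D p ?a + 2 \<or> D p (refl \<alpha> c ?a) + 2 = D p ?a"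
    using main_D[OF z al ra th h1 h2] .
  thus ?thesis using L0 Lx by auto
qed

end
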